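(* Let $n\geq 4$ and let $c$ be an exact $4$-coloring of $\mathcal{B}_n$ with $c(\emptyset)\neq c([n])$. Then $\mathcal{B}_n$ contains no rainbow induced copy of $\mathcal{B}_2$ if and only if $c$ is of Type 2, Type 3-1, Type 3-2, Type 4-1 or Type 4-2.
   Context: $\mathcal{B}_n$ is the Boolean lattice of subsets of $[n]$ under inclusion. For $X\subseteq Y$: $\mathcal{B}_{[X,Y]}=\{Z:X\subseteq Z\subseteq Y\}$, and $\mathcal{B}_{(X,Y)}$, $\mathcal{B}_{(X,Y]}$, $\mathcal{B}_{[X,Y)}$ are defined analogously with strict inclusion at the open ends. For $X\subsetneq Y$ define $\mathcal{B}^{Y\uparrow}_{(X,[n]]}=\{Z\in\mathcal{B}_{(X,[n]]}: Z\cap(Y\setminus X)\neq\emptyset\}$ and $\mathcal{B}^{X\downarrow}_{[\emptyset,Y)}=\{Z\in\mathcal{B}_{[\emptyset,Y)}: Y\setminus X\not\subseteq Z\}$. An exact $k$-coloring is a surjective map $c:\mathcal{B}_n\to[k]$. A rainbow induced copy of $\mathcal{B}_2$ is four sets $W_1\subsetneq W_2,W_3\subsetneq W_4$ with $W_2,W_3$ incomparable and pairwise distinct colors. "Families $\mathcal{F}_1,\dots,\mathcal{F}_r$ are monochromatically colored with distinct colors" means each is monochromatic and no two sets from different families share a color. In Types 2, 3-1, 3-2 there are $X_0,Y_0$ with $\emptyset\subsetneq X_0\subsetneq Y_0\subsetneq[n]$, $|Y_0|\ge|X_0|+2$. Type 2: the families $\mathcal{B}_{[\emptyset,Y_0]}\setminus\mathcal{B}_{[X_0,Y_0]}$,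 $\{X_0,Y_0\}$, $\mathcal{B}_{(X_0,Y_0)}$, $\mathcal{B}_{[X_0,[n]]}\setminus\mathcal{B}_{[X_0,Y_0]}$ are monochromatically colored with distinct colors, and each set in $\mathcal{B}_n\setminus(\mathcal{B}_{[\emptyset,Y_0]}\cup\mathcal{B}_{[X_0,[n]]})$ has the color of the first or the last family. Type 3-1: the families $\mathcal{B}_{[\emptyset,Y_0]}\setminus\mathcal{B}_{[X_0,Y_0]}$, $\{X_0\}\cup(\mathcal{B}^{Y_0\uparrow}_{(X_0,[n]]}\setminus\mathcal{B}_{(X_0,Y_0]})$, $\mathcal{B}_{(X_0,Y_0)}$, $\{Y_0\}$ are monochromatically colored with distinct colors, and each set in $\mathcal{B}_n\setminus(\mathcal{B}_{[\emptyset,Y_0]}\cup\mathcal{B}^{Y_0\uparrow}_{(X_0,[n]]})$ has the color of the first or the second family. Type 3-2: the families $\mathcal{B}_{[X_0,[n]]}\setminus\mathcal{B}_{[X_0,Y_0]}$, $\{Y_0\}\cup(\mathcal{B}^{X_0\downarrow}_{[\emptyset,Y_0)}\setminus\mathcal{B}_{[X_0,Y_0)})$, $\mathcal{B}_{(X_0,Y_0)}$, $\{X_0\}$ are monochromatically colored with distinct colors, and each set in $\mathcal{B}_n\setminus(\mathcal{B}_{[X_0,[n]]}\cup\mathcal{B}^{X_0\downarrow}_{[\emptyset,Y_0)})$ has the color of the first or the second family. Type 4-1: there are a set $X_0$ with $1\le|X_0|\le n-2$ and a nonempty family $\mathcal{Y}_0\subseteq\mathcal{B}_{(X_0,[n]]}$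 such that the families $\bigcup_{Y\in\mathcal{Y}_0}(\mathcal{B}_{[\emptyset,Y)}\setminus\mathcal{B}_{[X_0,Y)})$, $\{X_0\}$, $\mathcal{B}_{(X_0,[n]]}\setminus\mathcal{Y}_0$, $\mathcal{Y}_0$ are monochromatically colored with distinct colors, and each set in $\mathcal{B}_n\setminus(\mathcal{B}_{[X_0,[n]]}\cup\bigcup_{Y\in\mathcal{Y}_0}\mathcal{B}_{[\emptyset,Y)})$ has the color of the first or the third family. Type 4-2: there are a set $Y_0$ with $2\le|Y_0|\le n-1$ and a nonempty family $\mathcal{X}_0\subseteq\mathcal{B}_{(\emptyset,Y_0)}$ such that the families $\bigcup_{X\in\mathcal{X}_0}(\mathcal{B}_{(X,[n]]}\setminus\mathcal{B}_{(X,Y_0]})$, $\{Y_0\}$, $\mathcal{B}_{[\emptyset,Y_0)}\setminus\mathcal{X}_0$, $\mathcal{X}_0$ are monochromatically colored with distinct colors, and each set in $\mathcal{B}_n\setminus(\mathcal{B}_{[\emptyset,Y_0]}\cup\bigcup_{X\in\mathcal{X}_0}\mathcal{B}_{(X,[n]]})$ has the color of the first or the third family. *)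

theory Defs
  imports Main
begin

definition BL :: "nat \<Rightarrow> nat set set" where
  "BL n = Pow {1..n}"

definition ivl_cc :: "nat set \<Rightarrow> nat set \<Rightarrow> nat set set" where
  "ivl_cc X Y = {Z. X \<subseteq> Z \<and> Z \<subseteq> Y}"
definition ivl_oo :: "nat set \<Rightarrow> nat set \<Rightarrow> nat set set" where
  "ivl_oo X Y = {Z. X \<subset> Z \<and> Z \<subset> Y}"
definition ivl_oc :: "nat set \<Rightarrow> nat set \<Rightarrow> nat set set" where
  "ivl_oc X Y = {Z. X \<subset> Z \<and> Z \<subseteq> Y}"
definition ivl_co :: "nat set \<Rightarrow> nat set \<Rightarrow> nat set set" where
  "ivl_co X Y = {Z. X \<subseteq> Z \<and> Z \<subset> Y}"

definition up_fam :: "nat \<Rightarrow> nat set \<Rightarrow> nat set \<Rightarrow> nat set set" where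
  "up_fam n X Y = {Z \<in> ivl_oc X {1..n}. Z \<inter> (Y - X) \<noteq> {}}"
definition down_fam :: "nat set \<Rightarrow> nat set \<Rightarrow> nat set set" where
  "down_fam X Y = {Z \<in> ivl_co {} Y. \<not> (Y - X \<subseteq> Z)}"

definition exact_coloring :: "nat \<Rightarrow> nat \<Rightarrow> (nat set \<Rightarrow> nat) \<Rightarrow> bool" where
  "exact_coloring n k c \<longleftrightarrow> c ` BL n = {1..k}"

definition rainbow_B2 :: "nat \<Rightarrow> (nat set \<Rightarrow> nat) \<Rightarrow> bool" where
  "rainbow_B2 n c \<longleftrightarrow> (\<exists>W1 W2 W3 W4. W1 \<in> BL n \<and> W2 \<in> BL n \<and> W3 \<in> BL n \<and> W4 \<in> BL n \<and>
      W1 \<subset> W2 \<and> W1 \<subset> W3 \<and> W2 \<subset> W4 \<and> W3 \<subset> W4 \<and>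
      \<not> W2 \<subseteq> W3 \<and> \<not> W3 \<subseteq> W2 \<and>
      c W1 \<noteq> c W2 \<and> c W1 \<noteq> c W3 \<and> c W1 \<noteq> c W4 \<and>
      c W2 \<noteq> c W3 \<and> c W2 \<noteq> c W4 \<and> c W3 \<noteq> c W4)"

definition mono_distinct :: "(nat set \<Rightarrow> nat) \<Rightarrow> nat set set list \<Rightarrow> bool" where
  "mono_distinct c Fs \<longleftrightarrow>
     (\<forall>F \<in> set Fs. \<forall>A \<in> F. \<forall>B \<in> F. c A = c B) \<and>
     (\<forall>i < length Fs. \<forall>j < length Fs. i \<noteq> j \<longrightarrow> (\<forall>A \<in> Fs ! i. \<forall>B \<in> Fs ! j. c A \<noteq> c B))"

definition has_color_of :: "(nat set \<Rightarrow> nat) \<Rightarrow> nat set \<Rightarrow> nat set set \<Rightarrow> bool" where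
  "has_color_of c Z F \<longleftrightarrow> (\<exists>A \<in> F. c Z = c A)"

definition type2 :: "nat \<Rightarrow> (nat set \<Rightarrow> nat) \<Rightarrow> bool" where
  "type2 n c \<longleftrightarrow> (\<exists>X0 Y0. {} \<subset> X0 \<and> X0 \<subset> Y0 \<and> Y0 \<subset> {1..n} \<and> card Y0 \<ge> card X0 + 2 \<and>
     (let F1 = ivl_cc {} Y0 - ivl_cc X0 Y0; F2 = {X0, Y0}; F3 = ivl_oo X0 Y0;
          F4 = ivl_cc X0 {1..n} - ivl_cc X0 Y0 in
      mono_distinct c [F1, F2, F3, F4] \<and>
      (\<forall>Z \<in> BL n - (ivl_cc {} Y0 \<union> ivl_cc X0 {1..n}). has_color_of c Z F1 \<or> has_color_of c Z F4)))"

definition type31 :: "nat \<Rightarrow> (nat set \<Rightarrow> nat) \<Rightarrow> bool" where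
  "type31 n c \<longleftrightarrow> (\<exists>X0 Y0. {} \<subset> X0 \<and> X0 \<subset> Y0 \<and> Y0 \<subset> {1..n} \<and> card Y0 \<ge> card X0 + 2 \<and>
     (let F1 = ivl_cc {} Y0 - ivl_cc X0 Y0; F2 = {X0} \<union> (up_fam n X0 Y0 - ivl_oc X0 Y0);
          F3 = ivl_oo X0 Y0; F4 = {Y0} in
      mono_distinct c [F1, F2, F3, F4] \<and>
      (\<forall>Z \<in> BL n - (ivl_cc {} Y0 \<union> up_fam n X0 Y0). has_color_of c Z F1 \<or> has_color_of c Z F2)))"

definition type32 :: "nat \<Rightarrow> (nat set \<Rightarrow> nat) \<Rightarrow> bool" where
  "type32 n c \<longleftrightarrow> (\<exists>X0 Y0. {} \<subset> X0 \<and> X0 \<subset> Y0 \<and> Y0 \<subset> {1..n} \<and> card Y0 \<ge> card X0 + 2 \<and>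
     (let F1 = ivl_cc X0 {1..n} - ivl_cc X0 Y0; F2 = {Y0} \<union> (down_fam X0 Y0 - ivl_co X0 Y0);
          F3 = ivl_oo X0 Y0; F4 = {X0} in
      mono_distinct c [F1, F2, F3, F4] \<and>
      (\<forall>Z \<in> BL n - (ivl_cc X0 {1..n} \<union> down_fam X0 Y0). has_color_of c Z F1 \<or> has_color_of c Z F2)))"

definition type41 :: "nat \<Rightarrow> (nat set \<Rightarrow> nat) \<Rightarrow> bool" where
  "type41 n c \<longleftrightarrow> (\<exists>X0 \<YY>0. X0 \<subseteq> {1..n} \<and> 1 \<le> card X0 \<and> card X0 + 2 \<le> n \<and>
     \<YY>0 \<noteq> {} \<and> \<YY>0 \<subseteq> ivl_oc X0 {1..n} \<and>
     (let F1 = (\<Union>Y \<in> \<YY>0. ivl_co {} Y - ivl_co X0 Y); F2 = {X0};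
          F3 = ivl_oc X0 {1..n} - \<YY>0; F4 = \<YY>0 in
      mono_distinct c [F1, F2, F3, F4] \<and>
      (\<forall>Z \<in> BL n - (ivl_cc X0 {1..n} \<union> (\<Union>Y \<in> \<YY>0. ivl_co {} Y)).
          has_color_of c Z F1 \<or> has_color_of c Z F3)))"

definition type42 :: "nat \<Rightarrow> (nat set \<Rightarrow> nat) \<Rightarrow> bool" where
  "type42 n c \<longleftrightarrow> (\<exists>Y0 \<XX>0. Y0 \<subseteq> {1..n} \<and> 2 \<le> card Y0 \<and> card Y0 + 1 \<le> n \<and>
     \<XX>0 \<noteq> {} \<and> \<XX>0 \<subseteq> ivl_oo {} Y0 \<and>
     (let F1 = (\<Union>X \<in> \<XX>0. ivl_oc X {1..n} - ivl_oc X Y0); F2 = {Y0};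
          F3 = ivl_co {} Y0 - \<XX>0; F4 = \<XX>0 in
      mono_distinct c [F1, F2, F3, F4] \<and>
      (\<forall>Z \<in> BL n - (ivl_cc {} Y0 \<union> (\<Union>X \<in> \<XX>0. ivl_oc X {1..n})).
          has_color_of c Z F1 \<or> has_color_of c Z F3)))"

end

theory Submission
  imports Defs
begin

lemma ex_min_set: "finite F \<Longrightarrow> A \<in> F \<Longrightarrow> \<exists>u\<in>F. \<forall>v\<in>F. \<not> v \<subset> u"
  using finite_has_minimal2[of F A] by (metis psubset_imp_subset psubset_eq)

lemma ex_max_set: "finite F \<Longrightarrow> A \<in> F \<Longrightarrow> \<exists>u\<in>F. \<forall>v\<in>F. \<not> u \<subset> v"
  using finite_has_maximal2[of F A] by (metis psubset_imp_subset psubset_eq)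

lemma md4:
  assumes "\<forall>Z\<in>F1. c Z = k1" "\<forall>Z\<in>F2. c Z = k2" "\<forall>Z\<in>F3. c Z = k3" "\<forall>Z\<in>F4. c Z = k4"
    and "k1 \<noteq> k2" "k1 \<noteq> k3" "k1 \<noteq> k4" "k2 \<noteq> k3" "k2 \<noteq> k4" "k3 \<noteq> k4"
  shows "mono_distinct c [F1, F2, F3, F4]"
proof -
  have A: "\<forall>F\<in>set [F1, F2, F3, F4]. \<forall>A\<in>F. \<forall>B\<in>F. c A = c B" using assms(1-4) by auto
  have kk: "\<And>i. i < 4 \<Longrightarrow> \<forall>Z\<in>[F1, F2, F3, F4] ! i. c Z = [k1,k2,k3,k4] ! i"
  proof -
    fix i :: nat assume "i < 4"
    then have "i = 0 \<or> i = 1 \<or> i = 2 \<or> i = 3" by auto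
    then show "\<forall>Z\<in>[F1, F2, F3, F4] ! i. c Z = [k1,k2,k3,k4] ! i" using assms(1-4) by auto
  qed
  have dk: "\<And>i j. i < 4 \<Longrightarrow> j < 4 \<Longrightarrow> i \<noteq> j \<Longrightarrow> [k1,k2,k3,k4] ! i \<noteq> [k1,k2,k3,k4] ! j"
  proof -
    fix i j :: nat assume "i < 4" "j < 4" "i \<noteq> j"
    then have "i = 0 \<or> i = 1 \<or> i = 2 \<or> i = 3" "j = 0 \<or> j = 1 \<or> j = 2 \<or> j = 3" by auto
    then show "[k1,k2,k3,k4] ! i \<noteq> [k1,k2,k3,k4] ! j" using assms(5-10) \<open>i \<noteq> j\<close> by auto
  qed
  have B: "\<forall>i < length [F1, F2, F3, F4]. \<forall>j < length [F1, F2, F3, F4]. i \<noteq> j \<longrightarrow>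
      (\<forall>A \<in> [F1, F2, F3, F4] ! i. \<forall>B \<in> [F1, F2, F3, F4] ! j. c A \<noteq> c B)"
  proof (intro allI impI ballI)
    fix i j A B assume "i < length [F1, F2, F3, F4]" "j < length [F1, F2, F3, F4]" "i \<noteq> j"
      "A \<in> [F1, F2, F3, F4] ! i" "B \<in> [F1, F2, F3, F4] ! j"
    then show "c A \<noteq> c B" using kk[of i] kk[of j] dk[of i j] by auto
  qed
  show ?thesis unfolding mono_distinct_def using A B by blast
qed

lemma conn_aux:
  assumes "u \<subset> A" "A \<subset> Z" "Z \<subset> s"
  shows "\<exists>W. u \<subset> W \<and> W \<subset> s \<and> \<not> W \<subseteq> A \<and> \<not> A \<subseteq> W \<and> \<not> W \<subseteq> Z \<and> \<not> Z \<subseteq> W"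
proof -
  obtain d where d: "d \<in> A" "d \<notin> u" using assms by blast
  obtain e where e: "e \<in> Z" "e \<notin> A" using assms by blast
  obtain f where f: "f \<in> s" "f \<notin> Z" using assms by blast
  have s1: "u \<subseteq> s - {d}" using assms d by auto
  have s2: "e \<in> s - {d}" "e \<notin> u" using assms d e by auto
  have "u \<subset> s - {d}" using s1 s2 by auto
  moreover have "s - {d} \<subset> s" using assms d by auto
  moreover have "\<not> s - {d} \<subseteq> A" using assms e f d by auto
  moreover have "\<not> A \<subseteq> s - {d}" using d by auto
  moreover have "\<not> s - {d} \<subseteq> Z" using f d e assms by auto
  moreover have "\<not> Z \<subseteq> s - {d}" using d assms by auto
  ultimately show ?thesis by blast
qed

lemma conn:
  assumes "u \<subset> A" "A \<subset> s" "u \<subset> Z" "Z \<subset> s" "A \<subset> Z \<or> Z \<subset> A"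
  shows "\<exists>W. u \<subset> W \<and> W \<subset> s \<and> \<not> W \<subseteq> A \<and> \<not> A \<subseteq> W \<and> \<not> W \<subseteq> Z \<and> \<not> Z \<subseteq> W"
  proof (cases "A \<subset> Z")
  case True then show ?thesis using assms conn_aux[of u A Z s] by auto
next
  case False then have "Z \<subset> A" using assms by auto
  then obtain W where "u \<subset> W \<and> W \<subset> s \<and> \<not> W \<subseteq> Z \<and> \<not> Z \<subseteq> W \<and> \<not> W \<subseteq> A \<and> \<not> A \<subseteq> W"
    using assms conn_aux[of u Z A s] by auto
  then show ?thesis by auto
qed

lemma conn_obt: assumes "u \<subset> A" "A \<subset> s" "u \<subset> Z" "Z \<subset> s" "A \<subset> Z \<or> Z \<subset> A"
  obtains W where "u \<subset> W" "W \<subset> s" "\<not> W \<subseteq> A" "\<not> A \<subseteq> W" "\<not> W \<subseteq> Z" "\<not> Z \<subseteq> W"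
  using conn[OF assms] by (elim exE conjE)

lemma hco: "A \<in> F \<Longrightarrow> c Z = c A \<Longrightarrow> has_color_of c Z F"
  unfolding has_color_of_def by blast

locale RF4 =
  fixes n :: nat and c :: "nat set \<Rightarrow> nat" and a b x y :: nat
  assumes nrb: "\<not> rainbow_B2 n c"
  and ca: "c {} = a" and cb: "c {1..n} = b"
  and dab: "a \<noteq> b" and dax: "a \<noteq> x" and day: "a \<noteq> y" and dbx: "b \<noteq> x" and dby: "b \<noteq> y"
  and dxy: "x \<noteq> y"
  and cov: "\<And>Z. Z \<subseteq> {1..n} \<Longrightarrow> c Z = a \<or> c Z = b \<or> c Z = x \<or> c Z = y"
begin

lemma dist[simp]: "a \<noteq> b" "a \<noteq> x" "a \<noteq> y" "b \<noteq> x" "b \<noteq> y" "x \<noteq> y"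
  "b \<noteq> a" "x \<noteq> a" "y \<noteq> a" "x \<noteq> b" "y \<noteq> b" "y \<noteq> x"
  using dab dax day dbx dby dxy by auto

lemma nr:
  assumes "W1 \<subset> W2" "W1 \<subset> W3" "W2 \<subset> W4" "W3 \<subset> W4" "\<not> W2 \<subseteq> W3" "\<not> W3 \<subseteq> W2"
    "W4 \<subseteq> {1..n}"
    "c W1 \<noteq> c W2" "c W1 \<noteq> c W3" "c W1 \<noteq> c W4" "c W2 \<noteq> c W3" "c W2 \<noteq> c W4" "c W3 \<noteq> c W4"
  shows False
proof -
  have "W1 \<in> BL n" "W2 \<in> BL n" "W3 \<in> BL n" "W4 \<in> BL n"
    using assms(1-7) unfolding BL_def by auto
  then have "rainbow_B2 n c" unfolding rainbow_B2_def using assms by blast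
  then show False using nrb by simp
qed

lemma nrk:
  assumes "W1 \<subset> W2" "W1 \<subset> W3" "W2 \<subset> W4" "W3 \<subset> W4" "\<not> W2 \<subseteq> W3" "\<not> W3 \<subseteq> W2"
    "W4 \<subseteq> {1..n}"
    "c W1 = k1" "c W2 = k2" "c W3 = k3" "c W4 = k4"
    "k1 \<noteq> k2" "k1 \<noteq> k3" "k1 \<noteq> k4" "k2 \<noteq> k3" "k2 \<noteq> k4" "k3 \<noteq> k4"
  shows False
proof -
  have "c W1 \<noteq> c W2" "c W1 \<noteq> c W3" "c W1 \<noteq> c W4" "c W2 \<noteq> c W3" "c W2 \<noteq> c W4" "c W3 \<noteq> c W4"
    using assms(8-17) by simp_all
  then show False using nr assms(1-7) by blast
qed

lemma swap: "RF4 n c a b y x"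
  by (unfold_locales) (use nrb ca cb cov in auto)

lemma fin: "Z \<subseteq> {1..n} \<Longrightarrow> finite Z"
  using finite_subset by blast

end

context RF4 begin

lemma Vlem:
  fixes s u G :: "nat set" and \<beta> \<gamma> :: nat
  assumes s: "s \<subseteq> {1..n}"
  and col: "\<And>Z. Z \<subset> s \<Longrightarrow> c Z = a \<or> c Z = \<beta> \<or> c Z = \<gamma>"
  and top: "c s \<noteq> a" "c s \<noteq> \<beta>" "c s \<noteq> \<gamma>"
  and d: "a \<noteq> \<beta>" "a \<noteq> \<gamma>" "\<beta> \<noteq> \<gamma>"
  and u: "u \<subset> s" "c u = \<beta>" "\<And>v. v \<subset> u \<Longrightarrow> c v = a"
  and G: "G \<subset> s" "c G = \<gamma>"
  and Z: "Z \<subset> s"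
  shows "(c Z = \<beta> \<longleftrightarrow> Z = u) \<and> (c Z = \<gamma> \<longleftrightarrow> u \<subset> Z)"
proof -
  have V: "False" if "W1 \<subset> W2" "W1 \<subset> W3" "W2 \<subset> s" "W3 \<subset> s" "\<not> W2 \<subseteq> W3" "\<not> W3 \<subseteq> W2"
    "c W1 \<noteq> c W2" "c W1 \<noteq> c W3" "c W2 \<noteq> c W3" for W1 W2 W3
  proof -
    have "W1 \<subset> s" using that by auto
    then have "c W1 = a \<or> c W1 = \<beta> \<or> c W1 = \<gamma>" "c W2 = a \<or> c W2 = \<beta> \<or> c W2 = \<gamma>"
       "c W3 = a \<or> c W3 = \<beta> \<or> c W3 = \<gamma>" using col that by blast+
    then have "c W1 \<noteq> c s" "c W2 \<noteq> c s" "c W3 \<noteq> c s" using top by metis+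
    moreover have "W1 \<subset> W2" "W1 \<subset> W3" "W2 \<subset> s" "W3 \<subset> s" "\<not> W2 \<subseteq> W3" "\<not> W3 \<subseteq> W2" using that by auto
    ultimately show False using nr[of W1 W2 W3 s] s that(7-9) by blast
  qed
  have cc: "B \<subset> G' \<or> G' \<subset> B" if "B \<subset> s" "G' \<subset> s" "c B = \<beta>" "c G' = \<gamma>" for B G'
  proof (rule ccontr)
    assume a1: "\<not> (B \<subset> G' \<or> G' \<subset> B)"
    have "B \<noteq> G'" using that d by metis
    then have i: "\<not> B \<subseteq> G'" "\<not> G' \<subseteq> B" using a1 by auto
    have "B \<noteq> {}" "G' \<noteq> {}" using that d ca by metis+
    then have "{} \<subset> B" "{} \<subset> G'" by auto
    moreover have "c {} \<noteq> c B" "c {} \<noteq> c G'" "c B \<noteq> c G'" using that d ca by metis+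
    ultimately show False using V[of "{}" B G'] that i by blast
  qed
  have uG: "u \<subset> G"
  proof -
    have "u \<subset> G \<or> G \<subset> u" using cc[of u G] u G by blast
    moreover have "\<not> G \<subset> u" using u(3)[of G] G d by metis
    ultimately show ?thesis by blast
  qed
  have s2a: "c Z' = \<gamma>" if "u \<subset> Z'" "Z' \<subset> s" "u \<subset> G'" "G' \<subset> s" "c G' = \<gamma>"
    "\<not> Z' \<subseteq> G'" "\<not> G' \<subseteq> Z'" for Z' G'
  proof -
    have "c Z' \<noteq> a"
    proof
      assume "c Z' = a"
      then have "c u \<noteq> c Z'" "c u \<noteq> c G'" "c Z' \<noteq> c G'" using u that d by metis+
      then show False using V[of u Z' G'] that by blast
    qed
    moreover have "c Z' \<noteq> \<beta>"
    proof
      assume "c Z' = \<beta>"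
      then have "c {} \<noteq> c Z'" "c {} \<noteq> c G'" "c Z' \<noteq> c G'" using ca that d by metis+
      moreover have "{} \<subset> Z'" using that by auto
      moreover have "{} \<subset> G'" using that by auto
      ultimately show False using V[of "{}" Z' G'] that by blast
    qed
    ultimately show ?thesis using col[of Z'] that by blast
  qed
  have s2: "c Z' = \<gamma>" if hz: "u \<subset> Z'" "Z' \<subset> s" for Z'
  proof (cases "Z' = G")
    case True then show ?thesis using G by simp
  next
    case False
    show ?thesis
    proof (cases "Z' \<subset> G \<or> G \<subset> Z'")
      case True
      obtain W where W: "u \<subset> W" "W \<subset> s" "\<not> W \<subseteq> G" "\<not> G \<subseteq> W" "\<not> W \<subseteq> Z'" "\<not> Z' \<subseteq> W"
        by (rule conn_obt[OF uG G(1) hz(1) hz(2)]) (use True in auto)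
      have "c W = \<gamma>" using s2a[of W G] W uG G by blast
      then show ?thesis using s2a[of Z' W] W that by blast
    next
      case False
      then have "\<not> Z' \<subseteq> G" "\<not> G \<subseteq> Z'" using \<open>Z' \<noteq> G\<close> by auto
      then show ?thesis using s2a[of Z' G] that uG G by blast
    qed
  qed
  have s3: "c Z' = a" if "Z' \<subset> s" "\<not> u \<subseteq> Z'" for Z'
  proof (cases "Z' \<subset> u")
    case True then show ?thesis using u by auto
  next
    case False
    then have inc: "\<not> Z' \<subseteq> u" using that by auto
    have ng: "c Z' \<noteq> \<gamma>"
    proof
      assume "c Z' = \<gamma>"
      then have "u \<subset> Z' \<or> Z' \<subset> u" using cc[of u Z'] u that by blast
      then show False using that inc by auto
    qed
    have nb: "c Z' \<noteq> \<beta>"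
    proof
      assume zb: "c Z' = \<beta>"
      obtain e where e: "e \<in> Z'" "e \<notin> u" using inc by auto
      obtain g1 where g1: "g1 \<in> G" "g1 \<notin> u" using uG by auto
      obtain g2 where g2: "g2 \<in> s" "g2 \<notin> G" using G by auto
      have es: "e \<in> s" using e that by auto
      have W1: "u \<subset> s - {e}"
      proof -
        have "u \<subseteq> s - {e}" using e u by auto
        moreover have "g1 \<in> s - {e} \<and> g1 \<notin> u \<or> g2 \<in> s - {e} \<and> g2 \<notin> u"
          using g1 g2 G uG by auto
        ultimately show ?thesis by auto
      qed
      have W2: "s - {e} \<subset> s" using es by auto
      have "c (s - {e}) = \<gamma>" using s2 W1 W2 by blast
      then have "Z' \<subset> s - {e} \<or> s - {e} \<subset> Z'" using cc[of Z' "s - {e}"] zb that W2 by blast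
      then show False using e that W1 by auto
    qed
    show ?thesis using col[of Z'] that ng nb by blast
  qed
  show ?thesis
  proof (cases "u \<subset> Z")
    case True
    then have "c Z = \<gamma>" using s2 Z by blast
    then show ?thesis using True d by auto
  next
    case False
    show ?thesis
    proof (cases "Z = u")
      case True then show ?thesis using u(2) d(3) by simp
    next
      case False
      then have "\<not> u \<subseteq> Z" using \<open>\<not> u \<subset> Z\<close> by auto
      have "c Z = a" using s3 Z \<open>\<not> u \<subseteq> Z\<close> by blast
      then show ?thesis using d(1,2) \<open>\<not> u \<subset> Z\<close> False by simp
    qed
  qed
qed

lemma Lam:
  fixes p u G :: "nat set" and \<beta> \<gamma> :: nat
  assumes p: "p \<subseteq> {1..n}"
  and col: "\<And>Z. p \<subset> Z \<Longrightarrow> Z \<subseteq> {1..n} \<Longrightarrow> c Z = b \<or> c Z = \<beta> \<or> c Z = \<gamma>"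
  and bot: "c p \<noteq> b" "c p \<noteq> \<beta>" "c p \<noteq> \<gamma>"
  and d: "b \<noteq> \<beta>" "b \<noteq> \<gamma>" "\<beta> \<noteq> \<gamma>"
  and u: "p \<subset> u" "u \<subseteq> {1..n}" "c u = \<beta>" "\<And>v. u \<subset> v \<Longrightarrow> v \<subseteq> {1..n} \<Longrightarrow> c v = b"
  and G: "p \<subset> G" "G \<subseteq> {1..n}" "c G = \<gamma>"
  and Z: "p \<subset> Z" "Z \<subseteq> {1..n}"
  shows "(c Z = \<beta> \<longleftrightarrow> Z = u) \<and> (c Z = \<gamma> \<longleftrightarrow> Z \<subset> u)"
proof -
  have L: "False" if "p \<subset> W2" "p \<subset> W3" "W2 \<subset> W4" "W3 \<subset> W4" "W4 \<subseteq> {1..n}" "\<not> W2 \<subseteq> W3" "\<not> W3 \<subseteq> W2"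
    "c W2 \<noteq> c W3" "c W2 \<noteq> c W4" "c W3 \<noteq> c W4" for W2 W3 W4
  proof -
    have "p \<subset> W4" "W2 \<subseteq> {1..n}" "W3 \<subseteq> {1..n}" using that by auto
    then have "c W4 = b \<or> c W4 = \<beta> \<or> c W4 = \<gamma>" "c W2 = b \<or> c W2 = \<beta> \<or> c W2 = \<gamma>"
       "c W3 = b \<or> c W3 = \<beta> \<or> c W3 = \<gamma>" using col that by blast+
    then have "c p \<noteq> c W2" "c p \<noteq> c W3" "c p \<noteq> c W4" using bot by metis+
    moreover have "p \<subset> W2" "p \<subset> W3" "W2 \<subset> W4" "W3 \<subset> W4" "\<not> W2 \<subseteq> W3" "\<not> W3 \<subseteq> W2" using that by auto
    ultimately show False using nr[of p W2 W3 W4] that(5) that(8-10) by blast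
  qed
  have N: "c {1..n} = b" using cb .
  have cc: "B \<subset> G' \<or> G' \<subset> B" if "p \<subset> B" "p \<subset> G'" "B \<subseteq> {1..n}" "G' \<subseteq> {1..n}"
     "c B = \<beta>" "c G' = \<gamma>" for B G'
  proof (rule ccontr)
    assume a1: "\<not> (B \<subset> G' \<or> G' \<subset> B)"
    have "B \<noteq> G'" using that d by metis
    then have i: "\<not> B \<subseteq> G'" "\<not> G' \<subseteq> B" using a1 by auto
    have "B \<noteq> {1..n}" "G' \<noteq> {1..n}" using that d N by metis+
    then have "B \<subset> {1..n}" "G' \<subset> {1..n}" using that by auto
    moreover have "c B \<noteq> c {1..n}" "c G' \<noteq> c {1..n}" "c B \<noteq> c G'" using that d N by metis+
    ultimately show False using L[of B G' "{1..n}"] that i by blast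
  qed
  have uG: "G \<subset> u"
  proof -
    have "u \<subset> G \<or> G \<subset> u" using cc[of u G] u G by blast
    moreover have "\<not> u \<subset> G" using u(4)[of G] G d by metis
    ultimately show ?thesis by blast
  qed
  have s2a: "c Z' = \<gamma>" if "p \<subset> Z'" "Z' \<subset> u" "p \<subset> G'" "G' \<subset> u" "c G' = \<gamma>"
    "\<not> Z' \<subseteq> G'" "\<not> G' \<subseteq> Z'" for Z' G'
  proof -
    have "c Z' \<noteq> b"
    proof
      assume "c Z' = b"
      then have "c Z' \<noteq> c G'" "c Z' \<noteq> c u" "c G' \<noteq> c u" using u that d by metis+
      then show False using L[of Z' G' u] that u by blast
    qed
    moreover have "c Z' \<noteq> \<beta>"
    proof
      assume "c Z' = \<beta>"
      then have "c Z' \<noteq> c G'" "c Z' \<noteq> c {1..n}" "c G' \<noteq> c {1..n}" using N that d by metis+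
      moreover have "Z' \<subset> {1..n}" "G' \<subset> {1..n}" using that u by auto
      ultimately show False using L[of Z' G' "{1..n}"] that by blast
    qed
    moreover have "Z' \<subseteq> {1..n}" using that u by auto
    ultimately show ?thesis using col[of Z'] that by blast
  qed
  have s2: "c Z' = \<gamma>" if hz: "p \<subset> Z'" "Z' \<subset> u" for Z'
  proof (cases "Z' = G")
    case True then show ?thesis using G by simp
  next
    case False
    show ?thesis
    proof (cases "Z' \<subset> G \<or> G \<subset> Z'")
      case True
      obtain W where W: "p \<subset> W" "W \<subset> u" "\<not> W \<subseteq> G" "\<not> G \<subseteq> W" "\<not> W \<subseteq> Z'" "\<not> Z' \<subseteq> W"
        by (rule conn_obt[OF G(1) uG hz(1) hz(2)]) (use True in auto)
      have "c W = \<gamma>" using s2a[of W G] W uG G by blast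
      then show ?thesis using s2a[of Z' W] W hz by blast
    next
      case False
      then have "\<not> Z' \<subseteq> G" "\<not> G \<subseteq> Z'" using \<open>Z' \<noteq> G\<close> by auto
      then show ?thesis using s2a[of Z' G] hz uG G by blast
    qed
  qed
  have s3: "c Z' = b" if hz: "p \<subset> Z'" "Z' \<subseteq> {1..n}" "\<not> Z' \<subseteq> u" for Z'
  proof (cases "u \<subset> Z'")
    case True then show ?thesis using u hz by auto
  next
    case False
    then have inc: "\<not> u \<subseteq> Z'" using hz by auto
    have ng: "c Z' \<noteq> \<gamma>"
    proof
      assume "c Z' = \<gamma>"
      then have "u \<subset> Z' \<or> Z' \<subset> u" using cc[of u Z'] u hz by blast
      then show False using hz inc by auto
    qed
    have nb: "c Z' \<noteq> \<beta>"
    proof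
      assume zb: "c Z' = \<beta>"
      obtain e where e: "e \<in> u" "e \<notin> Z'" using inc by auto
      obtain g1 where g1: "g1 \<in> G" "g1 \<notin> p" using G by auto
      obtain g2 where g2: "g2 \<in> u" "g2 \<notin> G" using uG by auto
      have ep: "e \<notin> p" using e hz by auto
      have W1: "p \<union> {e} \<subset> u"
      proof -
        have "p \<union> {e} \<subseteq> u" using e u by auto
        moreover have "g1 \<in> u - (p \<union> {e}) \<or> g2 \<in> u - (p \<union> {e})"
          using g1 g2 G uG by auto
        ultimately show ?thesis by auto
      qed
      have W2: "p \<subset> p \<union> {e}" using ep by auto
      have "c (p \<union> {e}) = \<gamma>" using s2 W1 W2 by blast
      then have "Z' \<subset> p \<union> {e} \<or> p \<union> {e} \<subset> Z'" using cc[of Z' "p \<union> {e}"] zb hz W1 W2 u by blast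
      then show False using e hz W1 by auto
    qed
    show ?thesis using col[of Z'] hz ng nb by blast
  qed
  show ?thesis
  proof (cases "Z \<subset> u")
    case True
    then have "c Z = \<gamma>" using s2 Z by blast
    then show ?thesis using True d by auto
  next
    case False
    show ?thesis
    proof (cases "Z = u")
      case True then show ?thesis using u(3) d(3) by simp
    next
      case False
      then have "\<not> Z \<subseteq> u" using \<open>\<not> Z \<subset> u\<close> by auto
      have "c Z = b" using s3 Z \<open>\<not> Z \<subseteq> u\<close> by blast
      then show ?thesis using d(1,2) \<open>\<not> Z \<subset> u\<close> False by simp
    qed
  qed
qed

end

context RF4 begin

lemma cross:
  assumes "p \<subseteq> {1..n}" "q \<subseteq> {1..n}" "c p = x" "c q = y"
  shows "p \<subset> q \<or> q \<subset> p"
proof (rule ccontr)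
  assume h: "\<not> (p \<subset> q \<or> q \<subset> p)"
  have "p \<noteq> q" using assms(3,4) dxy by metis
  then have i: "\<not> p \<subseteq> q" "\<not> q \<subseteq> p" using h by auto
  have "p \<noteq> {}" "q \<noteq> {}" "p \<noteq> {1..n}" "q \<noteq> {1..n}" using assms(3,4) ca cb dist by metis+
  then have "{} \<subset> p" "{} \<subset> q" "p \<subset> {1..n}" "q \<subset> {1..n}" using assms by auto
  then show False by (rule_tac nrk[of "{}" p q "{1..n}" a x y b]) (use i assms ca cb in auto)
qed

lemma T1a:
  assumes "q1 \<subset> p0" "p0 \<subset> q2" "q2 \<subseteq> {1..n}" "c q1 = y" "c p0 = x" "c q2 = y"
    and Z: "q1 \<subset> Z" "Z \<subset> q2" "\<not> Z \<subseteq> p0" "\<not> p0 \<subseteq> Z"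
  shows "c Z = x"
proof -
  have N: "p0 \<subset> {1..n}" "Z \<subset> {1..n}" using assms by auto
  have e: "{} \<subset> p0" "{} \<subset> Z" using assms by auto
  have "c Z \<noteq> a"
  proof
    assume "c Z = a"
    then show False by (rule_tac nrk[of q1 p0 Z "{1..n}" y x a b]) (use assms N cb in auto)
  qed
  moreover have "c Z \<noteq> b"
  proof
    assume "c Z = b"
    then show False by (rule_tac nrk[of "{}" p0 Z q2 a x b y]) (use assms e ca in auto)
  qed
  moreover have "c Z \<noteq> y"
  proof
    assume "c Z = y"
    then show False by (rule_tac nrk[of "{}" p0 Z "{1..n}" a x y b]) (use assms N e ca cb in auto)
  qed
  ultimately show ?thesis using cov[of Z] assms by auto
qed

lemma T1:
  assumes sw: "q1 \<subset> p" "p \<subset> q2" "q2 \<subseteq> {1..n}" "c q1 = y" "c p = x" "c q2 = y"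
    and Z: "q1 \<subset> Z" "Z \<subset> q2"
  shows "c Z = x"
proof (cases "Z = p")
  case True then show ?thesis using sw by simp
next
  case False
  show ?thesis
  proof (cases "Z \<subset> p \<or> p \<subset> Z")
    case True
    obtain W where W: "q1 \<subset> W" "W \<subset> q2" "\<not> W \<subseteq> p" "\<not> p \<subseteq> W" "\<not> W \<subseteq> Z" "\<not> Z \<subseteq> W"
      by (rule conn_obt[OF sw(1) sw(2) Z(1) Z(2)]) (use True in auto)
    have "c W = x" using T1a[of q1 p q2 W] W sw by blast
    then show ?thesis using T1a[of q1 W q2 Z] W sw Z by blast
  next
    case False
    then have "\<not> Z \<subseteq> p" "\<not> p \<subseteq> Z" using \<open>Z \<noteq> p\<close> by auto
    then show ?thesis using T1a[of q1 p q2 Z] sw Z by blast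
  qed
qed

lemma T2:
  assumes sw: "q1 \<subset> p" "p \<subset> q2" "q2 \<subseteq> {1..n}" "c q1 = y" "c p = x" "c q2 = y"
    and q: "q \<subseteq> {1..n}" "c q = y"
  shows "q = q1 \<or> q = q2"
proof (rule ccontr)
  assume h: "\<not> (q = q1 \<or> q = q2)"
  obtain d1 where d1: "d1 \<in> p" "d1 \<notin> q1" using sw by auto
  obtain d2 where d2: "d2 \<in> q2" "d2 \<notin> p" using sw by auto
  have d12: "d1 \<noteq> d2" "d1 \<in> q2" "d2 \<notin> q1" using d1 d2 sw by auto
  have contra: False if W: "q1 \<subset> W" "W \<subset> q2" "\<not> W \<subseteq> q" "\<not> q \<subseteq> W" for W
  proof -
    have "c W = x" using T1[OF sw W(1) W(2)] .
    moreover have "W \<subseteq> {1..n}" using W sw by auto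
    ultimately have "W \<subset> q \<or> q \<subset> W" using cross[of W q] q by blast
    then show False using W by auto
  qed
  show False
  proof (cases "q \<subseteq> q1")
    case True
    then have "q \<subset> q1" using h by auto
    moreover have "q \<subset> p" "q1 \<subset> q2" using \<open>q \<subset> q1\<close> sw by auto
    ultimately have "c q1 = x" using T1[of q p q2 q1] sw q by blast
    then show False using sw by simp
  next
    case nq1: False
    show False
    proof (cases "q2 \<subseteq> q")
      case True
      then have "q2 \<subset> q" using h by auto
      moreover have "p \<subset> q" "q1 \<subset> q2" using \<open>q2 \<subset> q\<close> sw by auto
      ultimately have "c q2 = x" using T1[of q1 p q q2] sw q by blast
      then show False using sw by simp
    next
      case nq2: False
      obtain k where k: "k \<in> q" "k \<notin> q1" using nq1 by auto
      obtain j where j: "j \<in> q2" "j \<notin> q" using nq2 by auto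
      show False
      proof (cases "j \<in> q1")
        case False
        have "q1 \<subset> q1 \<union> {j}" using False by auto
        moreover have "q1 \<union> {j} \<subset> q2"
        proof -
          have "q1 \<union> {j} \<subseteq> q2" using j sw by auto
          moreover have "d1 \<notin> q1 \<union> {j} \<or> d2 \<notin> q1 \<union> {j}" using d12 d1 by auto
          ultimately show ?thesis using d12 d2 by auto
        qed
        moreover have "\<not> q1 \<union> {j} \<subseteq> q" using j by auto
        moreover have "\<not> q \<subseteq> q1 \<union> {j}" using k j by auto
        ultimately show False using contra by blast
      next
        case jq1: True
        show False
        proof (cases "k \<in> q2")
          case True
          have "q1 \<subset> q2 - {k}"
          proof -
            have "q1 \<subseteq> q2 - {k}" using k sw by auto
            moreover have "d1 \<in> q2 - {k} \<or> d2 \<in> q2 - {k}" using d12 d2 by auto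
            ultimately show ?thesis using d12 d1 by auto
          qed
          moreover have "q2 - {k} \<subset> q2" using True by auto
          moreover have "\<not> q2 - {k} \<subseteq> q" using jq1 j sw k by auto
          moreover have "\<not> q \<subseteq> q2 - {k}" using k by auto
          ultimately show False using contra by blast
        next
          case False
          have "\<not> p \<subseteq> q" using jq1 j sw by auto
          moreover have "\<not> q \<subseteq> p" using k False sw by auto
          ultimately show False using contra[of p] sw by blast
        qed
      qed
    qed
  qed
qed

lemma T3:
  assumes sw: "q1 \<subset> p" "p \<subset> q2" "q2 \<subseteq> {1..n}" "c q1 = y" "c p = x" "c q2 = y"
    and p': "p' \<subseteq> {1..n}" "c p' = x"
  shows "q1 \<subset> p' \<and> p' \<subset> q2"
proof -
  interpret sw4: RF4 n c a b y x by (rule swap)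
  have q1N: "q1 \<subseteq> {1..n}" using sw by auto
  have c1: "p' \<subset> q1 \<or> q1 \<subset> p'" using cross[OF p'(1) q1N p'(2) sw(4)] .
  have c2: "p' \<subset> q2 \<or> q2 \<subset> p'" using cross[OF p'(1) sw(3) p'(2) sw(6)] .
  have n1: "\<not> p' \<subset> q1"
  proof
    assume h: "p' \<subset> q1"
    have pN: "p \<subseteq> {1..n}" using sw by auto
    obtain h1 where h1: "h1 \<in> q1" "h1 \<notin> p'" using h by auto
    obtain h2 where h2: "h2 \<in> p" "h2 \<notin> q1" using sw by auto
    let ?W = "p' \<union> (p - q1)"
    have W1: "p' \<subset> ?W" using h h2 by auto
    have W2: "?W \<subset> p" using h h1 sw by auto
    have "c ?W = y" using sw4.T1[of p' q1 p ?W] h sw pN p' W1 W2 by auto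
    then have "?W = q1 \<or> ?W = q2" using T2[OF sw, of ?W] W2 pN by auto
    then show False using W2 h2 sw by auto
  qed
  have n2: "\<not> q2 \<subset> p'"
  proof
    assume h: "q2 \<subset> p'"
    obtain h1 where h1: "h1 \<in> q2" "h1 \<notin> p" using sw by auto
    obtain h2 where h2: "h2 \<in> p'" "h2 \<notin> q2" using h by auto
    let ?W = "p \<union> (p' - q2)"
    have W1: "p \<subset> ?W" using h2 sw by auto
    have W2: "?W \<subset> p'" using h h1 sw by auto
    have "c ?W = y" using sw4.T1[of p q2 p' ?W] h sw p' W1 W2 by auto
    then have "?W = q1 \<or> ?W = q2" using T2[OF sw, of ?W] W2 p' by auto
    then show False using W1 h2 sw by auto
  qed
  show ?thesis using c1 c2 n1 n2 by auto
qed

lemma T_ns: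
  assumes sw: "q1 \<subset> p" "p \<subset> q2" "q2 \<subseteq> {1..n}" "c q1 = y" "c p = x" "c q2 = y"
    and Z: "Z \<subseteq> {1..n}" "Z \<noteq> q1" "Z \<noteq> q2" "\<not> (q1 \<subset> Z \<and> Z \<subset> q2)"
  shows "c Z = a \<or> c Z = b"
proof -
  have "c Z \<noteq> y" using T2[OF sw Z(1)] Z by auto
  moreover have "c Z \<noteq> x" using T3[OF sw Z(1)] Z by auto
  ultimately show ?thesis using cov[OF Z(1)] by auto
qed

lemma T4:
  assumes sw: "q1 \<subset> p" "p \<subset> q2" "q2 \<subseteq> {1..n}" "c q1 = y" "c p = x" "c q2 = y"
    and Z: "Z \<subseteq> q2" "\<not> q1 \<subseteq> Z"
  shows "c Z = a"
proof -
  obtain d1 where d1: "d1 \<in> p" "d1 \<notin> q1" using sw by auto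
  obtain d2 where d2: "d2 \<in> q2" "d2 \<notin> p" using sw by auto
  have d12: "d1 \<noteq> d2" "d1 \<in> q2" "d2 \<notin> q1" using d1 d2 sw by auto
  have T4a: "c Z' \<noteq> b" if Z': "Z' \<subseteq> q2" "\<not> q1 \<subseteq> Z'" "\<not> Z' \<subseteq> q1" for Z'
  proof
    assume zb: "c Z' = b"
    obtain d where d: "d \<in> Z'" "d \<notin> q1" using Z' by auto
    have W1: "q1 \<subset> q2 - {d}"
    proof -
      have "q1 \<subseteq> q2 - {d}" using d sw by auto
      moreover have "d1 \<in> q2 - {d} \<or> d2 \<in> q2 - {d}" using d12 d2 by auto
      ultimately show ?thesis using d12 d1 by auto
    qed
    have W2: "q2 - {d} \<subset> q2" using d Z' by auto
    have cW: "c (q2 - {d}) = x" using T1[OF sw W1 W2] .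
    have "{} \<subset> q2 - {d}" "{} \<subset> Z'" "Z' \<subset> q2" using W1 Z' sw by auto
    then show False
      by (rule_tac nrk[of "{}" "q2 - {d}" Z' q2 a x b y]) (use W1 W2 cW zb d Z' sw ca in auto)
  qed
  have ZN: "Z \<subseteq> {1..n}" using Z sw by auto
  have nsZ: "c Z = a \<or> c Z = b"
    by (rule T_ns[OF sw ZN]) (use Z sw in auto)
  show ?thesis
  proof (cases "Z \<subseteq> q1")
    case False then show ?thesis using T4a[of Z] Z nsZ by auto
  next
    case True
    let ?d = d1
    have a1: "c (Z \<union> {?d}) \<noteq> b" using T4a[of "Z \<union> {?d}"] Z True d12 d1 by auto
    have nq: "\<not> q1 \<subseteq> Z \<union> {?d}" using Z(2) d1 by auto
    have zdN: "Z \<union> {?d} \<subseteq> {1..n}" using Z d12 sw by auto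
    have a2: "c (Z \<union> {?d}) = a \<or> c (Z \<union> {?d}) = b"
      by (rule T_ns[OF sw zdN]) (use nq sw in auto)
    have cZd: "c (Z \<union> {?d}) = a" using a1 a2 by auto
    have W1: "q1 \<subset> q2 - {?d}" using d12 d2 d1 sw by auto
    have W2: "q2 - {?d} \<subset> q2" using d12 by auto
    have cW: "c (q2 - {?d}) = x" using T1[OF sw W1 W2] .
    have "c Z \<noteq> b"
    proof
      assume zb: "c Z = b"
      have "Z \<subset> Z \<union> {?d}" "Z \<subset> q2 - {?d}" "Z \<union> {?d} \<subset> q2" "q2 - {?d} \<subset> q2"
        "\<not> Z \<union> {?d} \<subseteq> q2 - {?d}" "\<not> q2 - {?d} \<subseteq> Z \<union> {?d}"
        using True Z d1 d12 sw W1 by auto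
      then show False
        by (rule_tac nrk[of Z "Z \<union> {?d}" "q2 - {?d}" q2 b a x y]) (use zb cZd cW sw in auto)
    qed
    then show ?thesis using nsZ by auto
  qed
qed

lemma T5:
  assumes sw: "q1 \<subset> p" "p \<subset> q2" "q2 \<subseteq> {1..n}" "c q1 = y" "c p = x" "c q2 = y"
    and Z: "Z \<subseteq> {1..n}" "q1 \<subseteq> Z" "\<not> Z \<subseteq> q2"
  shows "c Z = b"
proof -
  obtain d1 where d1: "d1 \<in> p" "d1 \<notin> q1" using sw by auto
  obtain d2 where d2: "d2 \<in> q2" "d2 \<notin> p" using sw by auto
  have d12: "d1 \<noteq> d2" "d1 \<in> q2" "d2 \<notin> q1" using d1 d2 sw by auto
  have T5a: "c Z' \<noteq> a" if Z': "Z' \<subseteq> {1..n}" "q1 \<subseteq> Z'" "\<not> Z' \<subseteq> q2" "\<not> q2 \<subseteq> Z'" for Z'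
  proof
    assume za: "c Z' = a"
    obtain d where d: "d \<in> q2" "d \<notin> Z'" using Z' by auto
    have dq1: "d \<notin> q1" using d Z' by auto
    have W1: "q1 \<subset> q1 \<union> {d}" using dq1 by auto
    have W2: "q1 \<union> {d} \<subset> q2"
    proof -
      have "q1 \<union> {d} \<subseteq> q2" using d sw by auto
      moreover have "d1 \<notin> q1 \<union> {d} \<or> d2 \<notin> q1 \<union> {d}" using d12 d1 by auto
      ultimately show ?thesis using d12 d2 by auto
    qed
    have cW: "c (q1 \<union> {d}) = x" using T1[OF sw W1 W2] .
    have "Z' \<noteq> {1..n}" using za cb by (metis dist(1))
    then have "Z' \<subset> {1..n}" "q1 \<subset> Z'" "q1 \<union> {d} \<subset> {1..n}" using Z' W2 sw by auto
    then show False
      by (rule_tac nrk[of q1 "q1 \<union> {d}" Z' "{1..n}" y x a b]) (use W1 W2 cW za d Z' sw cb in auto)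
  qed
  have ZN: "Z \<subseteq> {1..n}" using Z sw by auto
  have nsZ: "c Z = a \<or> c Z = b"
    by (rule T_ns[OF sw ZN]) (use Z sw in auto)
  show ?thesis
  proof (cases "q2 \<subseteq> Z")
    case False then show ?thesis using T5a[of Z] Z nsZ by auto
  next
    case True
    let ?d = d1
    obtain h where h: "h \<in> Z" "h \<notin> q2" using Z by auto
    have hd: "h \<noteq> ?d" using h d12 by auto
    have a1: "c (Z - {?d}) \<noteq> a" using T5a[of "Z - {?d}"] Z True d12 d1 h hd by auto
    have nq: "\<not> Z - {?d} \<subseteq> q2" using h hd by auto
    have zdN: "Z - {?d} \<subseteq> {1..n}" using Z by auto
    have a2: "c (Z - {?d}) = a \<or> c (Z - {?d}) = b"
      by (rule T_ns[OF sw zdN]) (use nq sw in auto)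
    have cZd: "c (Z - {?d}) = b" using a1 a2 by auto
    have W1: "q1 \<subset> q1 \<union> {?d}" using d1 by auto
    have W2: "q1 \<union> {?d} \<subset> q2" using d12 d2 d1 sw by auto
    have cW: "c (q1 \<union> {?d}) = x" using T1[OF sw W1 W2] .
    have "c Z \<noteq> a"
    proof
      assume za: "c Z = a"
      have "q1 \<subset> Z - {?d}" "q1 \<union> {?d} \<subset> Z" "Z - {?d} \<subset> Z"
        "\<not> q1 \<union> {?d} \<subseteq> Z - {?d}" "\<not> Z - {?d} \<subseteq> q1 \<union> {?d}"
        using True Z d1 d12 sw h hd W2 by auto
      then show False
        by (rule_tac nrk[of q1 "q1 \<union> {?d}" "Z - {?d}" Z y x b a]) (use W1 za cZd cW sw Z in auto)
    qed
    then show ?thesis using nsZ by auto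
  qed
qed

lemma sand_type2:
  assumes sw: "q1 \<subset> p" "p \<subset> q2" "q2 \<subseteq> {1..n}" "c q1 = y" "c p = x" "c q2 = y"
  shows "type2 n c"
proof -
  have q1e: "q1 \<noteq> {}" using sw(4) ca by (metis dist(3))
  have q2N: "q2 \<noteq> {1..n}" using sw(6) cb by (metis dist(5))
  have fin2: "finite q2" "finite p" using sw fin by auto
  have card: "card q2 \<ge> card q1 + 2"
  proof -
    have "card q1 < card p" using psubset_card_mono[OF fin2(2) sw(1)] .
    moreover have "card p < card q2" using psubset_card_mono[OF fin2(1) sw(2)] .
    ultimately show ?thesis by auto
  qed
  let ?F1 = "ivl_cc {} q2 - ivl_cc q1 q2"
  let ?F2 = "{q1, q2}"
  let ?F3 = "ivl_oo q1 q2"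
  let ?F4 = "ivl_cc q1 {1..n} - ivl_cc q1 q2"
  have f1: "\<forall>Z\<in>?F1. c Z = a" using T4[OF sw] unfolding ivl_cc_def by auto
  have f2: "\<forall>Z\<in>?F2. c Z = y" using sw by auto
  have f3: "\<forall>Z\<in>?F3. c Z = x" using T1[OF sw] unfolding ivl_oo_def by auto
  have f4: "\<forall>Z\<in>?F4. c Z = b" using T5[OF sw] unfolding ivl_cc_def by auto
  have md: "mono_distinct c [?F1, ?F2, ?F3, ?F4]" by (rule md4[OF f1 f2 f3 f4]) auto
  have e1: "{} \<in> ?F1" using q1e unfolding ivl_cc_def by auto
  have e4: "{1..n} \<in> ?F4" using q2N sw unfolding ivl_cc_def by auto
  have rest: "\<forall>Z \<in> BL n - (ivl_cc {} q2 \<union> ivl_cc q1 {1..n}). has_color_of c Z ?F1 \<or> has_color_of c Z ?F4"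
  proof
    fix Z assume "Z \<in> BL n - (ivl_cc {} q2 \<union> ivl_cc q1 {1..n})"
    then have Z: "Z \<subseteq> {1..n}" "\<not> Z \<subseteq> q2" "\<not> q1 \<subseteq> Z" unfolding BL_def ivl_cc_def by auto
    have "c Z = a \<or> c Z = b" using T_ns[OF sw Z(1)] Z sw by auto
    then show "has_color_of c Z ?F1 \<or> has_color_of c Z ?F4"
      using hco[OF e1, of c Z] hco[OF e4, of c Z] ca cb by metis
  qed
  show ?thesis unfolding type2_def Let_def
    using q1e sw q2N card md rest by (intro exI[of _ q1] exI[of _ q2]) auto
qed

end

locale SD = RF4 +
  fixes t :: "nat set"
  assumes tN: "t \<subseteq> {1..n}" and ct: "c t = y" and tu: "\<And>Z. Z \<subseteq> {1..n} \<Longrightarrow> c Z = y \<Longrightarrow> Z = t"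
  and xb: "\<And>Z. Z \<subseteq> {1..n} \<Longrightarrow> c Z = x \<Longrightarrow> Z \<subset> t"
begin

lemma tN': "t \<subset> {1..n}"
proof -
  have "t \<noteq> {1..n}" using ct cb by (metis dist(5))
  then show ?thesis using tN by auto
qed

lemma ns_out: "Z \<subseteq> {1..n} \<Longrightarrow> \<not> Z \<subseteq> t \<Longrightarrow> c Z = a \<or> c Z = b"
proof -
  assume Z: "Z \<subseteq> {1..n}" "\<not> Z \<subseteq> t"
  have "c Z \<noteq> y" using tu[OF Z(1)] Z by auto
  moreover have "c Z \<noteq> x" using xb[OF Z(1)] Z by auto
  ultimately show ?thesis using cov[OF Z(1)] by auto
qed

lemma below: "Z \<subset> t \<Longrightarrow> c Z = a \<or> c Z = b \<or> c Z = x"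
proof -
  assume Z: "Z \<subset> t"
  then have "Z \<subseteq> {1..n}" using tN by auto
  moreover have "c Z \<noteq> y" using tu[of Z] Z tN by auto
  ultimately show ?thesis using cov[of Z] by auto
qed

lemma D1:
  assumes p: "p \<subseteq> {1..n}" "c p = x" and Z: "Z \<subseteq> {1..n}" "p \<subset> Z" "\<not> Z \<subseteq> t"
  shows "c Z = b"
proof -
  have pt: "p \<subset> t" using xb p by auto
  have nZ: "c Z = a \<or> c Z = b" using ns_out Z by auto
  have "c Z \<noteq> a"
  proof
    assume za: "c Z = a"
    have ZN: "Z \<subset> {1..n}" using za cb Z by (metis dist(1) psubsetI)
    show False
    proof (cases "t \<subseteq> Z")
      case False
      show False
        by (rule nrk[of p t Z "{1..n}" x y a b]) (use pt Z ZN tN' False p ct za cb in auto)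
    next
      case True
      obtain h where h: "h \<in> t" "h \<notin> p" using pt by auto
      obtain k where k: "k \<in> Z" "k \<notin> t" using Z by auto
      let ?T = "p \<union> (Z - t)"
      have TN: "?T \<subseteq> {1..n}" using p Z by auto
      have Tt: "\<not> ?T \<subseteq> t" using k by auto
      have pT: "p \<subset> ?T" using k pt by auto
      have tT: "\<not> t \<subseteq> ?T" using h by auto
      have "c ?T = a \<or> c ?T = b" using ns_out[OF TN Tt] .
      then show False
      proof
        assume Ta: "c ?T = a"
        have "?T \<subset> {1..n}" using Ta cb TN by (metis dist(1) psubsetI)
        then show False
          by (rule_tac nrk[of p t ?T "{1..n}" x y a b]) (use pt pT tT Tt tN' p ct Ta cb in auto)
      next
        assume Tb: "c ?T = b"
        have tZ: "t \<subset> Z" using True Z by auto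
        have TZ: "?T \<subset> Z" using h True Z pt by auto
        show False
          by (rule nrk[of p t ?T Z x y b a]) (use pt pT tT Tt tZ TZ Z p ct Tb za in auto)
      qed
    qed
  qed
  then show ?thesis using nZ by auto
qed

lemma Sdown_31:
  assumes u: "u \<subset> t" "c u = b"
    and VV: "\<And>Z. Z \<subset> t \<Longrightarrow> (c Z = b \<longleftrightarrow> Z = u) \<and> (c Z = x \<longleftrightarrow> u \<subset> Z)"
    and p0: "p0 \<subseteq> {1..n}" "c p0 = x"
  shows "type31 n c"
proof -
  have p0t: "p0 \<subset> t" using xb p0 by auto
  have up0: "u \<subset> p0" using VV[OF p0t] p0 by auto
  have ue: "u \<noteq> {}" using u ca by (metis dist(1))
  have fin2: "finite t" "finite p0" using tN p0 fin by auto
  have card: "card t \<ge> card u + 2"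
  proof -
    have "card u < card p0" using psubset_card_mono[OF fin2(2) up0] .
    moreover have "card p0 < card t" using psubset_card_mono[OF fin2(1) p0t] .
    ultimately show ?thesis by auto
  qed
  have bel: "c Z = a" if "Z \<subset> t" "Z \<noteq> u" "\<not> u \<subset> Z" for Z
    using below[OF that(1)] VV[OF that(1)] that by auto
  obtain g1 where g1: "g1 \<in> p0" "g1 \<notin> u" using up0 by auto
  obtain g2 where g2: "g2 \<in> t" "g2 \<notin> p0" using p0t by auto
  let ?F1 = "ivl_cc {} t - ivl_cc u t"
  let ?F2 = "{u} \<union> (up_fam n u t - ivl_oc u t)"
  let ?F3 = "ivl_oo u t"
  let ?F4 = "{t}"
  have f1: "\<forall>Z\<in>?F1. c Z = a"
  proof
    fix Z assume "Z \<in> ?F1"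
    then have Z: "Z \<subseteq> t" "\<not> u \<subseteq> Z" unfolding ivl_cc_def by auto
    then have "Z \<subset> t" "Z \<noteq> u" "\<not> u \<subset> Z" using u by auto
    then show "c Z = a" using bel by auto
  qed
  have f2: "\<forall>Z\<in>?F2. c Z = b"
  proof
    fix Z assume "Z \<in> ?F2"
    then have "Z = u \<or> (u \<subset> Z \<and> Z \<subseteq> {1..n} \<and> Z \<inter> (t - u) \<noteq> {} \<and> \<not> Z \<subseteq> t)"
      unfolding up_fam_def ivl_oc_def by auto
    then show "c Z = b"
    proof
      assume "Z = u" then show ?thesis using u by simp
    next
      assume Z: "u \<subset> Z \<and> Z \<subseteq> {1..n} \<and> Z \<inter> (t - u) \<noteq> {} \<and> \<not> Z \<subseteq> t"
      then obtain e where e: "e \<in> Z" "e \<in> t" "e \<notin> u" by auto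
      have pt: "u \<union> {e} \<subset> t"
      proof -
        have "u \<union> {e} \<subseteq> t" using e u by auto
        moreover have "g1 \<notin> u \<union> {e} \<or> g2 \<notin> u \<union> {e}" using g1 g2 up0 by auto
        ultimately show ?thesis using g1 g2 p0t by auto
      qed
      have cp: "c (u \<union> {e}) = x" using VV[OF pt] e by auto
      have "u \<union> {e} \<subset> Z" using e Z pt by auto
      moreover have "u \<union> {e} \<subseteq> {1..n}" using pt tN by auto
      ultimately show "c Z = b" using D1[of "u \<union> {e}" Z] cp Z by blast
    qed
  qed
  have f3: "\<forall>Z\<in>?F3. c Z = x" using VV unfolding ivl_oo_def by auto
  have f4: "\<forall>Z\<in>?F4. c Z = y" using ct by auto
  have md: "mono_distinct c [?F1, ?F2, ?F3, ?F4]" by (rule md4[OF f1 f2 f3 f4]) auto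
  have e1: "{} \<in> ?F1" using ue unfolding ivl_cc_def by auto
  have e2: "u \<in> ?F2" by auto
  have rest: "\<forall>Z \<in> BL n - (ivl_cc {} t \<union> up_fam n u t). has_color_of c Z ?F1 \<or> has_color_of c Z ?F2"
  proof
    fix Z assume "Z \<in> BL n - (ivl_cc {} t \<union> up_fam n u t)"
    then have Z: "Z \<subseteq> {1..n}" "\<not> Z \<subseteq> t" unfolding BL_def ivl_cc_def by auto
    have "c Z = a \<or> c Z = b" using ns_out Z by auto
    then show "has_color_of c Z ?F1 \<or> has_color_of c Z ?F2"
      using hco[OF e1, of c Z] hco[OF e2, of c Z] ca u(2) by metis
  qed
  show ?thesis unfolding type31_def Let_def
    using ue u tN' card md rest by (intro exI[of _ u] exI[of _ t]) auto
qed

lemma Sdown_41: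
  assumes u: "u \<subset> t" "c u = x"
    and VV: "\<And>Z. Z \<subset> t \<Longrightarrow> (c Z = x \<longleftrightarrow> Z = u) \<and> (c Z = b \<longleftrightarrow> u \<subset> Z)"
    and B: "B \<subset> t" "c B = b"
  shows "type41 n c"
proof -
  have uB: "u \<subset> B" using VV[OF B(1)] B by auto
  have ue: "u \<noteq> {}" using u ca by (metis dist(2))
  have fin2: "finite t" "finite B" "finite u" using tN B u fin by auto
  have card1: "1 \<le> card u" using ue fin2 by (simp add: Suc_leI card_gt_0_iff)
  have card2: "card u + 2 \<le> n"
  proof -
    have "card u < card B" using psubset_card_mono[OF fin2(2) uB] .
    moreover have "card B < card t" using psubset_card_mono[OF fin2(1) B(1)] .
    moreover have "card t < card {1..n}" using psubset_card_mono[OF _ tN'] by auto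
    ultimately show ?thesis by auto
  qed
  have uN: "u \<subseteq> {1..n}" using u tN by auto
  have bel: "c Z = a" if "Z \<subset> t" "Z \<noteq> u" "\<not> u \<subset> Z" for Z
    using below[OF that(1)] VV[OF that(1)] that by auto
  let ?F1 = "\<Union>Y \<in> {t}. ivl_co {} Y - ivl_co u Y"
  let ?F2 = "{u}"
  let ?F3 = "ivl_oc u {1..n} - {t}"
  let ?F4 = "{t}"
  have f1: "\<forall>Z\<in>?F1. c Z = a"
  proof
    fix Z assume "Z \<in> ?F1"
    then have Z: "Z \<subset> t" "\<not> u \<subseteq> Z" unfolding ivl_co_def by auto
    then show "c Z = a" using bel by auto
  qed
  have f3: "\<forall>Z\<in>?F3. c Z = b"
  proof
    fix Z assume "Z \<in> ?F3"
    then have Z: "u \<subset> Z" "Z \<subseteq> {1..n}" "Z \<noteq> t" unfolding ivl_oc_def by auto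
    show "c Z = b"
    proof (cases "Z \<subseteq> t")
      case True then show ?thesis using VV[of Z] Z by auto
    next
      case False then show ?thesis using D1[of u Z] uN u Z by auto
    qed
  qed
  have f2: "\<forall>Z\<in>?F2. c Z = x" using u by auto
  have f4: "\<forall>Z\<in>?F4. c Z = y" using ct by auto
  have md: "mono_distinct c [?F1, ?F2, ?F3, ?F4]" by (rule md4[OF f1 f2 f3 f4]) auto
  have e1: "{} \<in> ?F1" using ue u unfolding ivl_co_def by auto
  have e3: "{1..n} \<in> ?F3" using tN' u tN unfolding ivl_oc_def by auto
  have rest: "\<forall>Z \<in> BL n - (ivl_cc u {1..n} \<union> (\<Union>Y \<in> {t}. ivl_co {} Y)). has_color_of c Z ?F1 \<or> has_color_of c Z ?F3"
  proof
    fix Z assume "Z \<in> BL n - (ivl_cc u {1..n} \<union> (\<Union>Y \<in> {t}. ivl_co {} Y))"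
    then have Z: "Z \<subseteq> {1..n}" "\<not> u \<subseteq> Z" "\<not> Z \<subset> t" unfolding BL_def ivl_cc_def ivl_co_def by auto
    then have "\<not> Z \<subseteq> t" using u by auto
    then have "c Z = a \<or> c Z = b" using ns_out Z by auto
    then show "has_color_of c Z ?F1 \<or> has_color_of c Z ?F3"
      using hco[OF e1, of c Z] hco[OF e3, of c Z] ca cb by metis
  qed
  have sub: "{t} \<subseteq> ivl_oc u {1..n}" using u tN unfolding ivl_oc_def by auto
  show ?thesis unfolding type41_def Let_def
    using uN card1 card2 sub md rest by (intro exI[of _ u] exI[of _ "{t}"]) auto
qed

lemma Sdown_42:
  assumes nob: "\<And>Z. Z \<subset> t \<Longrightarrow> c Z \<noteq> b"
    and p0: "p0 \<subseteq> {1..n}" "c p0 = x"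
  shows "type42 n c"
proof -
  let ?X = "{Z. Z \<subseteq> {1..n} \<and> c Z = x}"
  have p0t: "p0 \<subset> t" using xb p0 by auto
  have p0e: "p0 \<noteq> {}" using p0 ca by (metis dist(2))
  have fin2: "finite t" "finite p0" using tN p0 fin by auto
  have card1: "2 \<le> card t"
  proof -
    have "0 < card p0" using p0e fin2 by auto
    moreover have "card p0 < card t" using psubset_card_mono[OF fin2(1) p0t] .
    ultimately show ?thesis by auto
  qed
  have card2: "card t + 1 \<le> n"
    using psubset_card_mono[OF _ tN'] by auto
  have Xne: "?X \<noteq> {}" using p0 by auto
  have Xsub: "?X \<subseteq> ivl_oo {} t"
  proof
    fix Z assume "Z \<in> ?X"
    then have "Z \<subset> t" "Z \<noteq> {}" using xb ca by (auto, metis dist(2))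
    then show "Z \<in> ivl_oo {} t" unfolding ivl_oo_def by auto
  qed
  let ?F1 = "\<Union>X \<in> ?X. ivl_oc X {1..n} - ivl_oc X t"
  let ?F2 = "{t}"
  let ?F3 = "ivl_co {} t - ?X"
  let ?F4 = "?X"
  have f1: "\<forall>Z\<in>?F1. c Z = b"
  proof
    fix Z assume "Z \<in> ?F1"
    then obtain X where X: "X \<subseteq> {1..n}" "c X = x" "X \<subset> Z" "Z \<subseteq> {1..n}" "\<not> Z \<subseteq> t"
      unfolding ivl_oc_def by auto
    show "c Z = b" using D1[OF X(1) X(2) X(4) X(3) X(5)] by simp
  qed
  have f3: "\<forall>Z\<in>?F3. c Z = a"
  proof
    fix Z assume "Z \<in> ?F3"
    then have Z: "Z \<subset> t" "c Z \<noteq> x" unfolding ivl_co_def using tN by auto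
    then show "c Z = a" using below[OF Z(1)] nob[OF Z(1)] by auto
  qed
  have f2: "\<forall>Z\<in>?F2. c Z = y" using ct by auto
  have f4: "\<forall>Z\<in>?F4. c Z = x" by auto
  have md: "mono_distinct c [?F1, ?F2, ?F3, ?F4]" by (rule md4[OF f1 f2 f3 f4]) auto
  have e3: "{} \<in> ?F3" using p0t ca unfolding ivl_co_def by auto
  have e1: "{1..n} \<in> ?F1" using p0t p0 tN' unfolding ivl_oc_def by auto
  have rest: "\<forall>Z \<in> BL n - (ivl_cc {} t \<union> (\<Union>X \<in> ?X. ivl_oc X {1..n})). has_color_of c Z ?F1 \<or> has_color_of c Z ?F3"
  proof
    fix Z assume "Z \<in> BL n - (ivl_cc {} t \<union> (\<Union>X \<in> ?X. ivl_oc X {1..n}))"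
    then have Z: "Z \<subseteq> {1..n}" "\<not> Z \<subseteq> t" unfolding BL_def ivl_cc_def by auto
    then have "c Z = a \<or> c Z = b" using ns_out Z by auto
    then show "has_color_of c Z ?F1 \<or> has_color_of c Z ?F3"
      using hco[OF e1, of c Z] hco[OF e3, of c Z] ca cb by metis
  qed
  show ?thesis unfolding type42_def Let_def
    using tN card1 card2 Xne Xsub md rest by (intro exI[of _ t] exI[of _ ?X]) auto
qed

lemma Sdown:
  assumes p0: "p0 \<subseteq> {1..n}" "c p0 = x"
  shows "type42 n c \<or> type31 n c \<or> type41 n c"
proof (cases "\<exists>B. B \<subset> t \<and> c B = b")
  case False
  then have "type42 n c" using Sdown_42[OF _ p0] by auto
  then show ?thesis by simp
next
  case True
  then obtain B where B: "B \<subset> t" "c B = b" by auto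
  let ?F = "{Z. Z \<subset> t \<and> c Z \<noteq> a}"
  have finF: "finite ?F"
  proof -
    have "finite t" using tN fin by auto
    then have "finite (Pow t)" by simp
    moreover have "?F \<subseteq> Pow t" by auto
    ultimately show ?thesis using finite_subset by blast
  qed
  have "c B \<noteq> a" using B(2) by simp
  then have BF: "B \<in> ?F" using B(1) by simp
  obtain u where uF: "u \<in> ?F" and umin: "\<forall>v\<in>?F. \<not> v \<subset> u" using ex_min_set[OF finF BF] by blast
  have ut: "u \<subset> t" and una: "c u \<noteq> a" using uF by auto
  have umin': "c v = a" if "v \<subset> u" for v
  proof (rule ccontr)
    assume "c v \<noteq> a"
    then have "v \<in> ?F" using that ut by auto
    then show False using umin that by blast
  qed
  have col: "c Z = a \<or> c Z = b \<or> c Z = x" if "Z \<subset> t" for Z using below that by blast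
  have top: "c t \<noteq> a" "c t \<noteq> b" "c t \<noteq> x" using ct by auto
  have p0t: "p0 \<subset> t" using xb p0 by auto
  have cu: "c u = b \<or> c u = x" using col[OF ut] una by auto
  then show ?thesis
  proof
    assume ub: "c u = b"
    have VV: "(c Z = b \<longleftrightarrow> Z = u) \<and> (c Z = x \<longleftrightarrow> u \<subset> Z)" if "Z \<subset> t" for Z
      by (rule Vlem[where s=t and u=u and G=p0 and \<beta>=b and \<gamma>=x])
         (use tN col top ut ub umin' p0t p0 that in auto)
    have "type31 n c" by (rule Sdown_31[OF ut ub VV p0]) auto
    then show ?thesis by simp
  next
    assume ux: "c u = x"
    have VV: "(c Z = x \<longleftrightarrow> Z = u) \<and> (c Z = b \<longleftrightarrow> u \<subset> Z)" if "Z \<subset> t" for Z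
      by (rule Vlem[where s=t and u=u and G=B and \<beta>=x and \<gamma>=b])
         (use tN col top ut ux umin' B that in auto)
    have "type41 n c" by (rule Sdown_41[OF ut ux VV B]) auto
    then show ?thesis by simp
  qed
qed

end

locale SU = RF4 +
  fixes s :: "nat set"
  assumes sN: "s \<subseteq> {1..n}" and cs: "c s = x" and su: "\<And>Z. Z \<subseteq> {1..n} \<Longrightarrow> c Z = x \<Longrightarrow> Z = s"
  and ya: "\<And>Z. Z \<subseteq> {1..n} \<Longrightarrow> c Z = y \<Longrightarrow> s \<subset> Z"
begin

lemma se: "s \<noteq> {}" using cs ca by (metis dist(2))

lemma ns_out: "Z \<subseteq> {1..n} \<Longrightarrow> \<not> s \<subseteq> Z \<Longrightarrow> c Z = a \<or> c Z = b"
proof -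
  assume Z: "Z \<subseteq> {1..n}" "\<not> s \<subseteq> Z"
  have "c Z \<noteq> y" using ya[OF Z(1)] Z by auto
  moreover have "c Z \<noteq> x" using su[OF Z(1)] Z by auto
  ultimately show ?thesis using cov[OF Z(1)] by auto
qed

lemma above: "s \<subset> Z \<Longrightarrow> Z \<subseteq> {1..n} \<Longrightarrow> c Z = b \<or> c Z = a \<or> c Z = y"
proof -
  assume Z: "s \<subset> Z" "Z \<subseteq> {1..n}"
  have "c Z \<noteq> x" using su[of Z] Z by auto
  then show ?thesis using cov[of Z] Z by auto
qed

lemma D1:
  assumes q: "q \<subseteq> {1..n}" "c q = y" and Z: "Z \<subset> q" "\<not> s \<subseteq> Z"
  shows "c Z = a"
proof -
  have sq: "s \<subset> q" using ya q by auto
  have ZN: "Z \<subseteq> {1..n}" using Z q by auto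
  have nZ: "c Z = a \<or> c Z = b" using ns_out ZN Z by auto
  have "c Z \<noteq> b"
  proof
    assume zb: "c Z = b"
    have Ze: "{} \<subset> Z" using zb ca by (metis dist(1) bot.not_eq_extremum)
    have es: "{} \<subset> s" using se by auto
    show False
    proof (cases "Z \<subseteq> s")
      case False
      show False
        by (rule nrk[of "{}" s Z q a x b y]) (use Ze es sq Z False q cs zb ca in auto)
    next
      case True
      obtain h where h: "h \<in> s" "h \<notin> Z" using Z by auto
      obtain k where k: "k \<in> q" "k \<notin> s" using sq by auto
      let ?T = "Z \<union> (q - s)"
      have TN: "?T \<subseteq> {1..n}" using ZN q by auto
      have Ts: "\<not> s \<subseteq> ?T" using h by auto
      have sT: "\<not> ?T \<subseteq> s" using k by auto
      have Tq: "?T \<subset> q" using h True sq Z by auto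
      have "c ?T = a \<or> c ?T = b" using ns_out[OF TN Ts] .
      then show False
      proof
        assume Tb: "c ?T = b"
        have "{} \<subset> ?T" using k by auto
        then show False
          by (rule_tac nrk[of "{}" s ?T q a x b y]) (use es sq Tq Ts sT q cs Tb ca in auto)
      next
        assume Ta: "c ?T = a"
        have Zs: "Z \<subset> s" using True h by auto
        have ZT: "Z \<subset> ?T" using k True by auto
        show False
          by (rule nrk[of Z s ?T q b x a y]) (use Zs ZT sq Tq Ts sT q cs Ta zb in auto)
      qed
    qed
  qed
  then show ?thesis using nZ by auto
qed

lemma Sup_32:
  assumes u: "s \<subset> u" "u \<subseteq> {1..n}" "c u = a"
    and VV: "\<And>Z. s \<subset> Z \<Longrightarrow> Z \<subseteq> {1..n} \<Longrightarrow> (c Z = a \<longleftrightarrow> Z = u) \<and> (c Z = y \<longleftrightarrow> Z \<subset> u)"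
    and q0: "q0 \<subseteq> {1..n}" "c q0 = y"
  shows "type32 n c"
proof -
  have sq0: "s \<subset> q0" using ya q0 by auto
  have q0u: "q0 \<subset> u" using VV[OF sq0 q0(1)] q0 by auto
  have uN: "u \<subset> {1..n}" using u cb by (metis dist(1) psubsetI)
  have fin2: "finite u" "finite q0" using u q0 fin by auto
  have card: "card u \<ge> card s + 2"
  proof -
    have "card s < card q0" using psubset_card_mono[OF fin2(2) sq0] .
    moreover have "card q0 < card u" using psubset_card_mono[OF fin2(1) q0u] .
    ultimately show ?thesis by auto
  qed
  obtain g1 where g1: "g1 \<in> q0" "g1 \<notin> s" using sq0 by auto
  obtain g2 where g2: "g2 \<in> u" "g2 \<notin> q0" using q0u by auto
  let ?F1 = "ivl_cc s {1..n} - ivl_cc s u"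
  let ?F2 = "{u} \<union> (down_fam s u - ivl_co s u)"
  let ?F3 = "ivl_oo s u"
  let ?F4 = "{s}"
  have f1: "\<forall>Z\<in>?F1. c Z = b"
  proof
    fix Z assume "Z \<in> ?F1"
    then have Z: "s \<subseteq> Z" "Z \<subseteq> {1..n}" "\<not> Z \<subseteq> u" unfolding ivl_cc_def by auto
    then have sZ: "s \<subset> Z" using u by auto
    have "c Z \<noteq> a" "c Z \<noteq> y" using VV[OF sZ Z(2)] Z by auto
    then show "c Z = b" using above[OF sZ Z(2)] by auto
  qed
  have f2: "\<forall>Z\<in>?F2. c Z = a"
  proof
    fix Z assume "Z \<in> ?F2"
    then have "Z = u \<or> (Z \<subset> u \<and> \<not> (u - s \<subseteq> Z) \<and> \<not> s \<subseteq> Z)"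
      unfolding down_fam_def ivl_co_def by auto
    then show "c Z = a"
    proof
      assume "Z = u" then show ?thesis using u by simp
    next
      assume Z: "Z \<subset> u \<and> \<not> (u - s \<subseteq> Z) \<and> \<not> s \<subseteq> Z"
      then obtain e where e: "e \<in> u" "e \<notin> s" "e \<notin> Z" by auto
      have sq: "s \<subset> u - {e}"
      proof -
        have "s \<subseteq> u - {e}" using e u by auto
        moreover have "g1 \<in> u - {e} \<or> g2 \<in> u - {e}" using g1 g2 q0u by auto
        ultimately show ?thesis using g1 g2 sq0 q0u by auto
      qed
      have qu: "u - {e} \<subset> u" using e by auto
      have qN: "u - {e} \<subseteq> {1..n}" using u by auto
      have cq: "c (u - {e}) = y" using VV[OF sq qN] qu by auto
      have "Z \<subset> u - {e}" using e Z sq by auto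
      then show "c Z = a" using D1[OF qN cq] Z by blast
    qed
  qed
  have f3: "\<forall>Z\<in>?F3. c Z = y"
  proof
    fix Z assume "Z \<in> ?F3"
    then have Z: "s \<subset> Z" "Z \<subset> u" unfolding ivl_oo_def by auto
    then have "Z \<subseteq> {1..n}" using u by auto
    then show "c Z = y" using VV[of Z] Z by auto
  qed
  have f4: "\<forall>Z\<in>?F4. c Z = x" using cs by auto
  have md: "mono_distinct c [?F1, ?F2, ?F3, ?F4]" by (rule md4[OF f1 f2 f3 f4]) auto
  have e1: "{1..n} \<in> ?F1" using sN uN unfolding ivl_cc_def by auto
  have e2: "u \<in> ?F2" by auto
  have rest: "\<forall>Z \<in> BL n - (ivl_cc s {1..n} \<union> down_fam s u). has_color_of c Z ?F1 \<or> has_color_of c Z ?F2"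
  proof
    fix Z assume "Z \<in> BL n - (ivl_cc s {1..n} \<union> down_fam s u)"
    then have Z: "Z \<subseteq> {1..n}" "\<not> s \<subseteq> Z" unfolding BL_def ivl_cc_def by auto
    have "c Z = a \<or> c Z = b" using ns_out Z by auto
    then show "has_color_of c Z ?F1 \<or> has_color_of c Z ?F2"
      using hco[OF e1, of c Z] hco[OF e2, of c Z] cb u(3) by metis
  qed
  show ?thesis unfolding type32_def Let_def
    using se u uN card md rest by (intro exI[of _ s] exI[of _ u]) auto
qed

lemma Sup_42:
  assumes u: "s \<subset> u" "u \<subseteq> {1..n}" "c u = y"
    and VV: "\<And>Z. s \<subset> Z \<Longrightarrow> Z \<subseteq> {1..n} \<Longrightarrow> (c Z = y \<longleftrightarrow> Z = u) \<and> (c Z = a \<longleftrightarrow> Z \<subset> u)"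
  shows "type42 n c"
proof -
  have uN: "u \<subset> {1..n}" using u cb by (metis dist(5) psubsetI)
  have fin2: "finite u" "finite s" using u sN fin by auto
  have card1: "2 \<le> card u"
  proof -
    have "0 < card s" using se fin2 by auto
    moreover have "card s < card u" using psubset_card_mono[OF fin2(1) u(1)] .
    ultimately show ?thesis by auto
  qed
  have card2: "card u + 1 \<le> n"
    using psubset_card_mono[OF _ uN] by auto
  let ?F1 = "\<Union>X \<in> {s}. ivl_oc X {1..n} - ivl_oc X u"
  let ?F2 = "{u}"
  let ?F3 = "ivl_co {} u - {s}"
  let ?F4 = "{s}"
  have f1: "\<forall>Z\<in>?F1. c Z = b"
  proof
    fix Z assume "Z \<in> ?F1"
    then have Z: "s \<subset> Z" "Z \<subseteq> {1..n}" "\<not> Z \<subseteq> u" unfolding ivl_oc_def by auto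
    have "c Z \<noteq> a" "c Z \<noteq> y" using VV[OF Z(1) Z(2)] Z by auto
    then show "c Z = b" using above[OF Z(1) Z(2)] by auto
  qed
  have f3: "\<forall>Z\<in>?F3. c Z = a"
  proof
    fix Z assume "Z \<in> ?F3"
    then have Z: "Z \<subset> u" "Z \<noteq> s" unfolding ivl_co_def by auto
    show "c Z = a"
    proof (cases "s \<subset> Z")
      case True then show ?thesis using VV[of Z] Z u by auto
    next
      case False
      then have "\<not> s \<subseteq> Z" using Z by auto
      then show ?thesis using D1[OF u(2) u(3) Z(1)] by blast
    qed
  qed
  have f2: "\<forall>Z\<in>?F2. c Z = y" using u by auto
  have f4: "\<forall>Z\<in>?F4. c Z = x" using cs by auto
  have md: "mono_distinct c [?F1, ?F2, ?F3, ?F4]" by (rule md4[OF f1 f2 f3 f4]) auto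
  have e3: "{} \<in> ?F3" using se u unfolding ivl_co_def by auto
  have e1: "{1..n} \<in> ?F1" using sN uN u unfolding ivl_oc_def by auto
  have rest: "\<forall>Z \<in> BL n - (ivl_cc {} u \<union> (\<Union>X \<in> {s}. ivl_oc X {1..n})). has_color_of c Z ?F1 \<or> has_color_of c Z ?F3"
  proof
    fix Z assume "Z \<in> BL n - (ivl_cc {} u \<union> (\<Union>X \<in> {s}. ivl_oc X {1..n}))"
    then have Z: "Z \<subseteq> {1..n}" "\<not> Z \<subseteq> u" "\<not> s \<subset> Z" unfolding BL_def ivl_cc_def ivl_oc_def by auto
    then have "\<not> s \<subseteq> Z" using u by auto
    then have "c Z = a \<or> c Z = b" using ns_out Z by auto
    then show "has_color_of c Z ?F1 \<or> has_color_of c Z ?F3"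
      using hco[OF e1, of c Z] hco[OF e3, of c Z] ca cb by metis
  qed
  have sub: "{s} \<subseteq> ivl_oo {} u" using se u unfolding ivl_oo_def by auto
  show ?thesis unfolding type42_def Let_def
    using u card1 card2 sub md rest by (intro exI[of _ u] exI[of _ "{s}"]) auto
qed

lemma Sup_41:
  assumes noa: "\<And>Z. s \<subset> Z \<Longrightarrow> Z \<subseteq> {1..n} \<Longrightarrow> c Z \<noteq> a"
    and q0: "q0 \<subseteq> {1..n}" "c q0 = y"
  shows "type41 n c"
proof -
  let ?Y = "{Z. Z \<subseteq> {1..n} \<and> c Z = y}"
  have sq0: "s \<subset> q0" using ya q0 by auto
  have q0N: "q0 \<subset> {1..n}" using q0 cb by (metis dist(5) psubsetI)
  have fin2: "finite q0" "finite s" using q0 sN fin by auto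
  have card1: "1 \<le> card s" using se fin2 by (simp add: Suc_leI card_gt_0_iff)
  have card2: "card s + 2 \<le> n"
  proof -
    have "card s < card q0" using psubset_card_mono[OF fin2(1) sq0] .
    moreover have "card q0 < card {1..n}" using psubset_card_mono[OF _ q0N] by auto
    ultimately show ?thesis by auto
  qed
  have Yne: "?Y \<noteq> {}" using q0 by auto
  have Ysub: "?Y \<subseteq> ivl_oc s {1..n}" using ya unfolding ivl_oc_def by auto
  let ?F1 = "\<Union>Y \<in> ?Y. ivl_co {} Y - ivl_co s Y"
  let ?F2 = "{s}"
  let ?F3 = "ivl_oc s {1..n} - ?Y"
  let ?F4 = "?Y"
  have f1: "\<forall>Z\<in>?F1. c Z = a"
  proof
    fix Z assume "Z \<in> ?F1"
    then obtain Y where Y: "Y \<subseteq> {1..n}" "c Y = y" "Z \<subset> Y" "\<not> s \<subseteq> Z"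
      unfolding ivl_co_def by auto
    show "c Z = a" using D1[OF Y(1) Y(2) Y(3) Y(4)] by simp
  qed
  have f3: "\<forall>Z\<in>?F3. c Z = b"
  proof
    fix Z assume "Z \<in> ?F3"
    then have Z: "s \<subset> Z" "Z \<subseteq> {1..n}" "c Z \<noteq> y" unfolding ivl_oc_def by auto
    then show "c Z = b" using above[OF Z(1) Z(2)] noa[OF Z(1) Z(2)] by auto
  qed
  have f2: "\<forall>Z\<in>?F2. c Z = x" using cs by auto
  have f4: "\<forall>Z\<in>?F4. c Z = y" by auto
  have md: "mono_distinct c [?F1, ?F2, ?F3, ?F4]" by (rule md4[OF f1 f2 f3 f4]) auto
  have e1: "{} \<in> ?F1" using sq0 q0 se unfolding ivl_co_def by auto
  have e3: "{1..n} \<in> ?F3" using sq0 q0N cb unfolding ivl_oc_def by auto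
  have rest: "\<forall>Z \<in> BL n - (ivl_cc s {1..n} \<union> (\<Union>Y \<in> ?Y. ivl_co {} Y)). has_color_of c Z ?F1 \<or> has_color_of c Z ?F3"
  proof
    fix Z assume "Z \<in> BL n - (ivl_cc s {1..n} \<union> (\<Union>Y \<in> ?Y. ivl_co {} Y))"
    then have Z: "Z \<subseteq> {1..n}" "\<not> s \<subseteq> Z" unfolding BL_def ivl_cc_def by auto
    then have "c Z = a \<or> c Z = b" using ns_out Z by auto
    then show "has_color_of c Z ?F1 \<or> has_color_of c Z ?F3"
      using hco[OF e1, of c Z] hco[OF e3, of c Z] ca cb by metis
  qed
  show ?thesis unfolding type41_def Let_def
    using sN card1 card2 Yne Ysub md rest by (intro exI[of _ s] exI[of _ ?Y]) auto
qed

lemma Sup: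
  assumes q0: "q0 \<subseteq> {1..n}" "c q0 = y"
  shows "type41 n c \<or> type32 n c \<or> type42 n c"
proof (cases "\<exists>A. s \<subset> A \<and> A \<subseteq> {1..n} \<and> c A = a")
  case False
  then have noa: "\<And>Z. s \<subset> Z \<Longrightarrow> Z \<subseteq> {1..n} \<Longrightarrow> c Z \<noteq> a" by blast
  have "type41 n c" using Sup_41[OF noa q0] .
  then show ?thesis by simp
next
  case True
  then obtain A where A: "s \<subset> A" "A \<subseteq> {1..n}" "c A = a" by auto
  let ?F = "{Z. s \<subset> Z \<and> Z \<subseteq> {1..n} \<and> c Z \<noteq> b}"
  have finF: "finite ?F"
  proof -
    have "finite (Pow {1..n})" by simp
    moreover have "?F \<subseteq> Pow {1..n}" by auto
    ultimately show ?thesis using finite_subset by blast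
  qed
  have "c A \<noteq> b" using A(3) by simp
  then have AF: "A \<in> ?F" using A by simp
  obtain u where uF: "u \<in> ?F" and umax: "\<forall>v\<in>?F. \<not> u \<subset> v" using ex_max_set[OF finF AF] by blast
  have su: "s \<subset> u" and uN: "u \<subseteq> {1..n}" and unb: "c u \<noteq> b" using uF by auto
  have umax': "c v = b" if "u \<subset> v" "v \<subseteq> {1..n}" for v
  proof (rule ccontr)
    assume "c v \<noteq> b"
    then have "v \<in> ?F" using that su by auto
    then show False using umax that by blast
  qed
  have col: "c Z = b \<or> c Z = a \<or> c Z = y" if "s \<subset> Z" "Z \<subseteq> {1..n}" for Z using above that by blast
  have bot: "c s \<noteq> b" "c s \<noteq> a" "c s \<noteq> y" using cs by auto
  have sq0: "s \<subset> q0" using ya q0 by auto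
  have cu: "c u = a \<or> c u = y" using col[OF su uN] unb by auto
  then show ?thesis
  proof
    assume ua: "c u = a"
    have VV: "(c Z = a \<longleftrightarrow> Z = u) \<and> (c Z = y \<longleftrightarrow> Z \<subset> u)" if "s \<subset> Z" "Z \<subseteq> {1..n}" for Z
      by (rule Lam[where p=s and u=u and G=q0 and \<beta>=a and \<gamma>=y])
         (use sN col bot su uN ua umax' sq0 q0 that in auto)
    have "type32 n c" by (rule Sup_32[OF su uN ua VV q0]) auto
    then show ?thesis by simp
  next
    assume uy: "c u = y"
    have VV: "(c Z = y \<longleftrightarrow> Z = u) \<and> (c Z = a \<longleftrightarrow> Z \<subset> u)" if "s \<subset> Z" "Z \<subseteq> {1..n}" for Z
      by (rule Lam[where p=s and u=u and G=A and \<beta>=y and \<gamma>=a])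
         (use sN col bot su uN uy umax' A that in auto)
    have "type42 n c" by (rule Sup_42[OF su uN uy VV]) auto
    then show ?thesis by simp
  qed
qed

end

context RF4 begin

lemma LA:
  assumes p'': "p'' \<subset> p" "c p'' = x" "c p = x"
    and eg: "e \<noteq> g" "e \<notin> p" "g \<notin> p" "c (p \<union> {e}) = y" "c (p \<union> {g}) = y"
    "p \<union> {e} \<subseteq> {1..n}" "p \<union> {g} \<subseteq> {1..n}"
  shows False
proof -
  let ?Z = "p'' \<union> {g}"
  have pN: "p \<subseteq> {1..n}" "p'' \<subseteq> {1..n}" using eg p'' by auto
  have ZN: "?Z \<subseteq> {1..n}" using eg p'' by auto
  have ny: "c ?Z \<noteq> y"
  proof
    assume "c ?Z = y"
    then have "p \<subset> ?Z \<or> ?Z \<subset> p" using cross[OF pN(1) ZN p''(3)] by blast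
    then show False using p'' eg by auto
  qed
  have nx: "c ?Z \<noteq> x"
  proof
    assume "c ?Z = x"
    then have "?Z \<subset> p \<union> {e} \<or> p \<union> {e} \<subset> ?Z" using cross[OF ZN eg(6)] eg by blast
    then show False using p'' eg by auto
  qed
  have "c ?Z = a \<or> c ?Z = b" using cov[OF ZN] nx ny by auto
  then show False
  proof
    assume za: "c ?Z = a"
    have "?Z \<subset> {1..n}" "p \<union> {e} \<subset> {1..n}" using za eg(4) cb ZN eg(6) by (metis dist(1) psubsetI, metis dist(5) psubsetI)
    then show False
      by (rule_tac nrk[of p'' "p \<union> {e}" ?Z "{1..n}" x y a b]) (use p'' eg za cb in auto)
  next
    assume zb: "c ?Z = b"
    have "{} \<subset> p" using p'' by auto
    then show False
      by (rule_tac nrk[of "{}" p ?Z "p \<union> {g}" a x b y]) (use p'' eg zb ca in auto)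
  qed
qed

lemma LA':
  assumes q: "q \<subset> q''" "q'' \<subseteq> {1..n}" "c q = y" "c q'' = y"
    and eg: "e \<noteq> g" "e \<in> q" "g \<in> q" "c (q - {e}) = x" "c (q - {g}) = x"
  shows False
proof -
  let ?Z = "q'' - {g}"
  obtain h where h: "h \<in> q''" "h \<notin> q" using q by auto
  have qN: "q \<subseteq> {1..n}" "q - {e} \<subseteq> {1..n}" using q by auto
  have ZN: "?Z \<subseteq> {1..n}" using q by auto
  have ny: "c ?Z \<noteq> y"
  proof
    assume "c ?Z = y"
    then have "q - {e} \<subset> ?Z \<or> ?Z \<subset> q - {e}" using cross[OF qN(2) ZN eg(4)] by blast
    then show False using h eg by auto
  qed
  have nx: "c ?Z \<noteq> x"
  proof
    assume "c ?Z = x"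
    then have "?Z \<subset> q \<or> q \<subset> ?Z" using cross[OF ZN qN(1) _ q(3)] by blast
    then show False using h eg by auto
  qed
  have "c ?Z = a \<or> c ?Z = b" using cov[OF ZN] nx ny by auto
  then show False
  proof
    assume zb: "c ?Z = b"
    have "{} \<subset> q - {e}" "{} \<subset> ?Z" using eg h by auto
    then show False
      by (rule_tac nrk[of "{}" "q - {e}" ?Z q'' a x b y]) (use q eg zb ca h in auto)
  next
    assume za: "c ?Z = a"
    have "?Z \<subset> {1..n}" "q \<subset> {1..n}" using za q(3) cb ZN qN(1) by (metis dist(1) psubsetI, metis dist(5) psubsetI)
    then show False
      by (rule_tac nrk[of "q - {g}" q ?Z "{1..n}" x y a b]) (use q eg za cb h in auto)
  qed
qed

lemma Kb:
  assumes PQ: "\<And>p q. p \<subseteq> {1..n} \<Longrightarrow> q \<subseteq> {1..n} \<Longrightarrow> c p = x \<Longrightarrow> c q = y \<Longrightarrow> p \<subset> q"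
    and p12: "p1 \<subseteq> {1..n}" "p2 \<subseteq> {1..n}" "c p1 = x" "c p2 = x" "p1 \<noteq> p2"
    and q12: "q1 \<subseteq> {1..n}" "q2 \<subseteq> {1..n}" "c q1 = y" "c q2 = y" "q1 \<noteq> q2"
  shows False
proof -
  have finN: "finite (Pow {1..n})" by simp
  let ?P = "{Z. Z \<subseteq> {1..n} \<and> c Z = x}"
  let ?Q = "{Z. Z \<subseteq> {1..n} \<and> c Z = y}"
  have finP: "finite ?P" by (rule finite_subset[OF _ finN]) auto
  have finQ: "finite ?Q" by (rule finite_subset[OF _ finN]) auto
  obtain p where pP: "p \<in> ?P" and pm: "\<forall>v\<in>?P. \<not> p \<subset> v"
    using ex_max_set[OF finP, of p1] p12 by auto
  obtain q where qQ: "q \<in> ?Q" and qm: "\<forall>v\<in>?Q. \<not> v \<subset> q"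
    using ex_min_set[OF finQ, of q1] q12 by auto
  have p: "p \<subseteq> {1..n}" "c p = x" using pP by auto
  have q: "q \<subseteq> {1..n}" "c q = y" using qQ by auto
  have pmax: "\<not> p \<subset> Z" if "Z \<subseteq> {1..n}" "c Z = x" for Z using pm that by auto
  have qmin: "\<not> Z \<subset> q" if "Z \<subseteq> {1..n}" "c Z = y" for Z using qm that by auto
  have pq: "p \<subset> q" using PQ[OF p(1) q(1) p(2) q(2)] .
  obtain p' where p': "p' \<subseteq> {1..n}" "c p' = x" "p' \<noteq> p" using p12 by metis
  obtain q' where q': "q' \<subseteq> {1..n}" "c q' = y" "q' \<noteq> q" using q12 by metis
  have qN: "q \<subset> {1..n}" using q cb by (metis dist(5) psubsetI)
  show False
  proof (cases "\<exists>B. B \<subset> q \<and> c B = b")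
    case True
    then obtain B where B: "B \<subset> q" "c B = b" by auto
    let ?F = "{Z. Z \<subset> q \<and> c Z \<noteq> a}"
    have finF: "finite ?F" by (rule finite_subset[OF _ finN]) (use q in auto)
    have "c B \<noteq> a" using B(2) by simp
    then have BF: "B \<in> ?F" using B(1) by simp
    obtain u where uF: "u \<in> ?F" and um: "\<forall>v\<in>?F. \<not> v \<subset> u" using ex_min_set[OF finF BF] by blast
    have uq: "u \<subset> q" and una: "c u \<noteq> a" using uF by auto
    have umin': "c v = a" if "v \<subset> u" for v
    proof (rule ccontr)
      assume "c v \<noteq> a"
      then have "v \<in> ?F" using that uq by auto
      then show False using um that by blast
    qed
    have col: "c Z = a \<or> c Z = b \<or> c Z = x" if "Z \<subset> q" for Z
    proof -
      have "Z \<subseteq> {1..n}" using that q by auto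
      moreover have "c Z \<noteq> y" using qmin[of Z] that q by auto
      ultimately show ?thesis using cov[of Z] by auto
    qed
    have top: "c q \<noteq> a" "c q \<noteq> b" "c q \<noteq> x" using q by auto
    have cu: "c u = b \<or> c u = x" using col[OF uq] una by auto
    then show False
    proof
      assume ub: "c u = b"
      have VV: "(c Z = b \<longleftrightarrow> Z = u) \<and> (c Z = x \<longleftrightarrow> u \<subset> Z)" if "Z \<subset> q" for Z
        by (rule Vlem[where s=q and u=u and G=p and \<beta>=b and \<gamma>=x])
           (use q col top uq ub umin' pq p that in auto)
      have up: "u \<subset> p" using VV[OF pq] p by auto
      obtain e where e: "e \<in> p" "e \<notin> u" using up by auto
      obtain g where g: "g \<in> q" "g \<notin> p" using pq by auto
      have eg: "e \<noteq> g" using e g by auto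
      have s1: "q - {e} \<subset> q" "u \<subset> q - {e}" using e g pq up uq by auto
      have s2: "q - {g} \<subset> q" "u \<subset> q - {g}" using e g pq up uq by auto
      have c1: "c (q - {e}) = x" using VV[OF s1(1)] s1 by auto
      have c2: "c (q - {g}) = x" using VV[OF s2(1)] s2 by auto
      have qeN: "q - {e} \<subseteq> {1..n}" "q - {g} \<subseteq> {1..n}" using q by auto
      have "q - {e} \<subset> q'" "q - {g} \<subset> q'" using PQ[OF qeN(1) q'(1) c1 q'(2)] PQ[OF qeN(2) q'(1) c2 q'(2)] by auto
      then have "q \<subseteq> q'" using eg by auto
      then have qq': "q \<subset> q'" using q' by auto
      show False by (rule LA'[OF qq' q'(1) q(2) q'(2) eg _ _ c1 c2]) (use e g pq in auto)
    next
      assume ux: "c u = x"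
      have VV: "(c Z = x \<longleftrightarrow> Z = u) \<and> (c Z = b \<longleftrightarrow> u \<subset> Z)" if "Z \<subset> q" for Z
        by (rule Vlem[where s=q and u=u and G=B and \<beta>=x and \<gamma>=b])
           (use q col top uq ux umin' B that in auto)
      have "p' \<subset> q" using PQ[OF p'(1) q(1) p'(2) q(2)] .
      then have "p' = u" using VV p' by auto
      moreover have "p = u" using VV pq p by auto
      ultimately show False using p' by auto
    qed
  next
    case Bnone: False
    show False
    proof (cases "\<exists>A. p \<subset> A \<and> A \<subseteq> {1..n} \<and> c A = a")
      case True
      then obtain A where A: "p \<subset> A" "A \<subseteq> {1..n}" "c A = a" by auto
      let ?F = "{Z. p \<subset> Z \<and> Z \<subseteq> {1..n} \<and> c Z \<noteq> b}"
      have finF: "finite ?F" by (rule finite_subset[OF _ finN]) auto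
      have "c A \<noteq> b" using A(3) by simp
      then have AF: "A \<in> ?F" using A by simp
      obtain u where uF: "u \<in> ?F" and um: "\<forall>v\<in>?F. \<not> u \<subset> v" using ex_max_set[OF finF AF] by blast
      have pu: "p \<subset> u" and uN: "u \<subseteq> {1..n}" and unb: "c u \<noteq> b" using uF by auto
      have umax': "c v = b" if "u \<subset> v" "v \<subseteq> {1..n}" for v
      proof (rule ccontr)
        assume "c v \<noteq> b"
        then have "v \<in> ?F" using that pu by auto
        then show False using um that by blast
      qed
      have col: "c Z = b \<or> c Z = a \<or> c Z = y" if "p \<subset> Z" "Z \<subseteq> {1..n}" for Z
      proof -
        have "c Z \<noteq> x" using pmax[of Z] that by auto
        then show ?thesis using cov[of Z] that by auto
      qed
      have bot: "c p \<noteq> b" "c p \<noteq> a" "c p \<noteq> y" using p by auto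
      have cu: "c u = a \<or> c u = y" using col[OF pu uN] unb by auto
      then show False
      proof
        assume ua: "c u = a"
        have VV: "(c Z = a \<longleftrightarrow> Z = u) \<and> (c Z = y \<longleftrightarrow> Z \<subset> u)" if "p \<subset> Z" "Z \<subseteq> {1..n}" for Z
          by (rule Lam[where p=p and u=u and G=q and \<beta>=a and \<gamma>=y])
             (use p col bot pu uN ua umax' pq q that in auto)
        have qu: "q \<subset> u" using VV[OF pq q(1)] q by auto
        obtain e where e: "e \<in> q" "e \<notin> p" using pq by auto
        obtain g where g: "g \<in> u" "g \<notin> q" using qu by auto
        have eg: "e \<noteq> g" "g \<notin> p" using e g pq by auto
        have s1: "p \<subset> p \<union> {e}" "p \<union> {e} \<subset> u" "p \<union> {e} \<subseteq> {1..n}" using e g pq qu uN by auto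
        have s2: "p \<subset> p \<union> {g}" "p \<union> {g} \<subset> u" "p \<union> {g} \<subseteq> {1..n}" using e g pq qu uN by auto
        have c1: "c (p \<union> {e}) = y" using VV[OF s1(1) s1(3)] s1 by auto
        have c2: "c (p \<union> {g}) = y" using VV[OF s2(1) s2(3)] s2 by auto
        have "p' \<subset> p \<union> {e}" "p' \<subset> p \<union> {g}" using PQ[OF p'(1) s1(3) p'(2) c1] PQ[OF p'(1) s2(3) p'(2) c2] by auto
        then have "p' \<subseteq> p" using eg by auto
        then have pp': "p' \<subset> p" using p' by auto
        show False by (rule LA[OF pp' p'(2) p(2) eg(1) e(2) eg(2) c1 c2 s1(3) s2(3)])
      next
        assume uy: "c u = y"
        have VV: "(c Z = y \<longleftrightarrow> Z = u) \<and> (c Z = a \<longleftrightarrow> Z \<subset> u)" if "p \<subset> Z" "Z \<subseteq> {1..n}" for Z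
          by (rule Lam[where p=p and u=u and G=A and \<beta>=y and \<gamma>=a])
             (use p col bot pu uN uy umax' A that in auto)
        have "p \<subset> q'" using PQ[OF p(1) q'(1) p(2) q'(2)] .
        then have "q' = u" using VV q' by auto
        moreover have "q = u" using VV pq q by auto
        ultimately show False using q' by auto
      qed
    next
      case Anone: False
      have Bn: "c Z \<noteq> b" if "Z \<subset> q" for Z using Bnone that by auto
      have An: "c Z \<noteq> a" if "p \<subset> Z" "Z \<subseteq> {1..n}" for Z using Anone that by auto
      obtain e where e: "e \<in> q" "e \<notin> p" using pq by auto
      have qe: "q = p \<union> {e}"
      proof (rule ccontr)
        assume ne: "q \<noteq> p \<union> {e}"
        let ?Z = "p \<union> {e}"
        have Z: "p \<subset> ?Z" "?Z \<subset> q" "?Z \<subseteq> {1..n}" using e pq ne q by auto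
        have "c ?Z \<noteq> a" "c ?Z \<noteq> b" "c ?Z \<noteq> x" "c ?Z \<noteq> y"
          using An[OF Z(1) Z(3)] Bn[OF Z(2)] pmax[OF Z(3)] qmin[OF Z(3)] Z by auto
        then show False using cov[OF Z(3)] by auto
      qed
      have case1: False if h: "p'' \<subseteq> {1..n}" "c p'' = x" "\<not> p'' \<subseteq> p"
        "q'' \<subseteq> {1..n}" "c q'' = y" "q'' \<noteq> q" for p'' q''
      proof -
        have p''q: "p'' \<subset> q" using PQ[OF h(1) q(1) h(2) q(2)] .
        have ep'': "e \<in> p''" using p''q qe h by auto
        have pq'': "p \<subset> q''" using PQ[OF p(1) h(4) p(2) h(5)] .
        have "\<not> q'' \<subseteq> q"
        proof
          assume "q'' \<subseteq> q"
          then have "q'' = q" using pq'' qe e by auto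
          then show False using h by auto
        qed
        then obtain f where f: "f \<in> q''" "f \<notin> q" by auto
        let ?Z = "p \<union> {f}"
        have Z: "p \<subset> ?Z" "?Z \<subseteq> q''" "?Z \<subseteq> {1..n}" using f pq'' qe h by auto
        have "c ?Z \<noteq> a" "c ?Z \<noteq> x" using An[OF Z(1) Z(3)] pmax[OF Z(3)] Z by auto
        moreover have "c ?Z \<noteq> y"
        proof
          assume "c ?Z = y"
          then have "p'' \<subset> ?Z" using PQ[OF h(1) Z(3) h(2)] by blast
          then show False using ep'' e f qe by auto
        qed
        ultimately have zb: "c ?Z = b" using cov[OF Z(3)] by auto
        have Zq: "?Z \<subset> q''" using Z zb h by (metis dist(5) psubsetI)
        have pq''2: "p'' \<subset> q''" using PQ[OF h(1) h(4) h(2) h(5)] .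
        show False
          by (rule nrk[of "{}" p'' ?Z q'' a x b y]) (use ep'' f Zq pq''2 p''q qe h zb ca in auto)
      qed
      have case2: False if h: "q'' \<subseteq> {1..n}" "c q'' = y" "\<not> q \<subseteq> q''"
        "p'' \<subseteq> {1..n}" "c p'' = x" "p'' \<subset> p" for p'' q''
      proof -
        have pq'': "p \<subset> q''" using PQ[OF p(1) h(1) p(2) h(2)] .
        have eq'': "e \<notin> q''" using h qe pq'' by auto
        obtain f where f: "f \<in> p" "f \<notin> p''" using h by auto
        let ?Z = "q - {f}"
        have Z: "?Z \<subset> q" "?Z \<subseteq> {1..n}" "p'' \<subset> ?Z" using f pq q h e qe by auto
        have "c ?Z \<noteq> b" "c ?Z \<noteq> y" using Bn[OF Z(1)] qmin[OF Z(2)] Z by auto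
        moreover have "c ?Z \<noteq> x"
        proof
          assume "c ?Z = x"
          then have "?Z \<subset> q''" using PQ[OF Z(2) h(1) _ h(2)] by blast
          then show False using eq'' e f qe by auto
        qed
        ultimately have za: "c ?Z = a" using cov[OF Z(2)] by auto
        have q''N: "q'' \<subset> {1..n}" using h cb by (metis dist(5) psubsetI)
        have p''q'': "p'' \<subset> q''" using PQ[OF h(4) h(1) h(5) h(2)] .
        show False
          by (rule nrk[of p'' ?Z q'' "{1..n}" x a y b]) (use Z q''N p''q'' qN eq'' e f qe pq'' h za cb in auto)
      qed
      show False
      proof (cases "p' \<subseteq> p")
        case False then show False using case1[OF p'(1) p'(2) False q'] by blast
      next
        case True
        then have pp': "p' \<subset> p" using p' by auto
        show False
        proof (cases "q \<subseteq> q'")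
          case False then show False using case2[OF q'(1) q'(2) False p'(1) p'(2) pp'] by blast
        next
          case True
          then have qq': "q \<subset> q'" using q' by auto
          obtain f where f: "f \<in> p" "f \<notin> p'" using pp' by auto
          obtain g where g: "g \<in> q'" "g \<notin> q" using qq' by auto
          let ?Z = "p' \<union> {e}"
          have Z: "?Z \<subset> q" "?Z \<subseteq> {1..n}" "p' \<subset> ?Z" using e f pp' qe q by auto
          have "c ?Z \<noteq> b" "c ?Z \<noteq> y" using Bn[OF Z(1)] qmin[OF Z(2)] Z by auto
          moreover have "c ?Z \<noteq> x"
          proof
            assume "c ?Z = x"
            moreover have "\<not> ?Z \<subseteq> p" using e by auto
            ultimately show False using case1[OF Z(2) _ _ q'] by blast
          qed
          ultimately have za: "c ?Z = a" using cov[OF Z(2)] by auto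
          let ?Z2 = "p \<union> {g}"
          have Z2: "p \<subset> ?Z2" "?Z2 \<subseteq> {1..n}" "?Z2 \<subset> q'" using g qe qq' q' e by auto
          have "c ?Z2 \<noteq> a" "c ?Z2 \<noteq> x" using An[OF Z2(1) Z2(2)] pmax[OF Z2(2)] Z2 by auto
          moreover have "c ?Z2 \<noteq> y"
          proof
            assume "c ?Z2 = y"
            moreover have "\<not> q \<subseteq> ?Z2" using e g qe by auto
            ultimately show False using case2[OF Z2(2) _ _ p'(1) p'(2) pp'] by blast
          qed
          ultimately have zb: "c ?Z2 = b" using cov[OF Z2(2)] by auto
          show False
            by (rule nrk[of p' ?Z ?Z2 q' x a b y]) (use Z Z2 qq' pp' e f g qe p' za zb q' in auto)
        qed
      qed
    qed
  qed
qed

end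

context RF4 begin

lemma case4:
  assumes PQ: "\<And>p q. p \<subseteq> {1..n} \<Longrightarrow> q \<subseteq> {1..n} \<Longrightarrow> c p = x \<Longrightarrow> c q = y \<Longrightarrow> p \<subset> q"
    and p0: "p0 \<subseteq> {1..n}" "c p0 = x" and q0: "q0 \<subseteq> {1..n}" "c q0 = y"
  shows "type31 n c \<or> type32 n c \<or> type41 n c \<or> type42 n c"
proof (cases "\<forall>Z. Z \<subseteq> {1..n} \<longrightarrow> c Z = x \<longrightarrow> Z = p0")
  case True
  have "SU n c a b x y p0"
    unfolding SU_def SU_axioms_def using RF4_axioms p0 True PQ[OF p0(1) _ p0(2)] by blast
  then have "type41 n c \<or> type32 n c \<or> type42 n c" using SU.Sup[of n c a b x y p0 q0] q0 by blast
  then show ?thesis by blast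
next
  case F1: False
  then obtain p1 where p1: "p1 \<subseteq> {1..n}" "c p1 = x" "p1 \<noteq> p0" by blast
  show ?thesis
  proof (cases "\<forall>Z. Z \<subseteq> {1..n} \<longrightarrow> c Z = y \<longrightarrow> Z = q0")
    case True
    have "SD n c a b x y q0"
      unfolding SD_def SD_axioms_def using RF4_axioms q0 True PQ[OF _ q0(1) _ q0(2)] by blast
    then have "type42 n c \<or> type31 n c \<or> type41 n c" using SD.Sdown[of n c a b x y q0 p0] p0 by blast
    then show ?thesis by blast
  next
    case False
    then obtain q1 where q1: "q1 \<subseteq> {1..n}" "c q1 = y" "q1 \<noteq> q0" by blast
    have False
      apply (rule Kb[of p0 p1 q0 q1])
      using PQ apply blast
      using p0 p1 q0 q1 by auto
    then show ?thesis by blast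
  qed
qed

lemma onlyif:
  assumes p0: "p0 \<subseteq> {1..n}" "c p0 = x" and q0: "q0 \<subseteq> {1..n}" "c q0 = y"
  shows "type2 n c \<or> type31 n c \<or> type32 n c \<or> type41 n c \<or> type42 n c"
proof -
  interpret sw: RF4 n c a b y x by (rule swap)
  show ?thesis
  proof (cases "\<exists>q1 p q2. q1 \<subset> p \<and> p \<subset> q2 \<and> q2 \<subseteq> {1..n} \<and> c q1 = y \<and> c p = x \<and> c q2 = y")
    case True
    then obtain q1 p q2 where "q1 \<subset> p" "p \<subset> q2" "q2 \<subseteq> {1..n}" "c q1 = y" "c p = x" "c q2 = y" by blast
    then have "type2 n c" using sand_type2 by blast
    then show ?thesis by blast
  next
    case S1: False
    show ?thesis
    proof (cases "\<exists>p1 q p2. p1 \<subset> q \<and> q \<subset> p2 \<and> p2 \<subseteq> {1..n} \<and> c p1 = x \<and> c q = y \<and> c p2 = x")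
      case True
      then obtain p1 q p2 where "p1 \<subset> q" "q \<subset> p2" "p2 \<subseteq> {1..n}" "c p1 = x" "c q = y" "c p2 = x" by blast
      then have "type2 n c" using sw.sand_type2 by blast
      then show ?thesis by blast
    next
      case S2: False
      have c0: "p0 \<subset> q0 \<or> q0 \<subset> p0" using cross[OF p0(1) q0(1) p0(2) q0(2)] .
      then show ?thesis
      proof
        assume h: "p0 \<subset> q0"
        have PQ: "p \<subset> q" if "p \<subseteq> {1..n}" "q \<subseteq> {1..n}" "c p = x" "c q = y" for p q
        proof -
          have "p \<subset> q0 \<or> q0 \<subset> p" using cross[OF that(1) q0(1) that(3) q0(2)] .
          moreover have "\<not> q0 \<subset> p" using S2 h p0 q0 that by blast
          ultimately have pq0: "p \<subset> q0" by blast
          have "p \<subset> q \<or> q \<subset> p" using cross[OF that] .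
          moreover have "\<not> q \<subset> p" using S1 pq0 q0 that by blast
          ultimately show ?thesis by blast
        qed
        show ?thesis using case4[OF PQ p0 q0] by blast
      next
        assume h: "q0 \<subset> p0"
        have PQ: "q \<subset> p" if "q \<subseteq> {1..n}" "p \<subseteq> {1..n}" "c q = y" "c p = x" for p q
        proof -
          have "q \<subset> p0 \<or> p0 \<subset> q" using sw.cross[OF that(1) p0(1) that(3) p0(2)] .
          moreover have "\<not> p0 \<subset> q" using S1 h p0 q0 that by blast
          ultimately have qp0: "q \<subset> p0" by blast
          have "q \<subset> p \<or> p \<subset> q" using sw.cross[OF that] .
          moreover have "\<not> p \<subset> q" using S2 qp0 p0 that by blast
          ultimately show ?thesis by blast
        qed
        show ?thesis using sw.case4[OF PQ q0 p0] by blast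
      qed
    qed
  qed
qed

end

lemma hco_mem: "A \<in> F \<Longrightarrow> has_color_of c A F"
  unfolding has_color_of_def by blast

lemma hco_excl:
  assumes "mono_distinct c Fs" "i < length Fs" "j < length Fs"
    "has_color_of c Z (Fs ! i)" "has_color_of c Z (Fs ! j)"
  shows "i = j"
proof (rule ccontr)
  assume "i \<noteq> j"
  obtain A B where "A \<in> Fs ! i" "B \<in> Fs ! j" "c Z = c A" "c Z = c B"
    using assms(4,5) unfolding has_color_of_def by blast
  then show False using assms(1-3) \<open>i \<noteq> j\<close> unfolding mono_distinct_def by metis
qed

lemma hco_same:
  assumes "mono_distinct c Fs" "i < length Fs"
    "has_color_of c Z (Fs ! i)" "has_color_of c Z' (Fs ! i)"
  shows "c Z = c Z'"
proof -
  obtain A B where "A \<in> Fs ! i" "B \<in> Fs ! i" "c Z = c A" "c Z' = c B"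
    using assms(3,4) unfolding has_color_of_def by blast
  moreover have "Fs ! i \<in> set Fs" using assms(2) by simp
  ultimately show ?thesis using assms(1) unfolding mono_distinct_def by metis
qed

lemma pig:
  assumes "j1 < (4::nat)" "j2 < 4" "j3 < 4" "j4 < 4"
    "j1 \<noteq> j2" "j1 \<noteq> j3" "j1 \<noteq> j4" "j2 \<noteq> j3" "j2 \<noteq> j4" "j3 \<noteq> j4" "i < 4"
  shows "i = j1 \<or> i = j2 \<or> i = j3 \<or> i = j4"
proof -
  have c4: "card {j1, j2, j3, j4} = 4" using assms(5-10) by simp
  have sub: "{j1, j2, j3, j4} \<subseteq> {..<4}" using assms(1-4) by auto
  have "{j1, j2, j3, j4} = {..<4}"
    by (rule card_subset_eq[OF _ sub]) (use c4 in auto)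
  then have "i \<in> {j1, j2, j3, j4}" using assms(11) by auto
  then show ?thesis by auto
qed

lemma rb_obtain:
  assumes "rainbow_B2 n c"
  obtains W1 W2 W3 W4 where "W1 \<subset> W2" "W1 \<subset> W3" "W2 \<subset> W4" "W3 \<subset> W4"
    "\<not> W2 \<subseteq> W3" "\<not> W3 \<subseteq> W2" "W4 \<in> BL n"
    "c W1 \<noteq> c W2" "c W1 \<noteq> c W3" "c W1 \<noteq> c W4" "c W2 \<noteq> c W3" "c W2 \<noteq> c W4" "c W3 \<noteq> c W4"
  using assms unfolding rainbow_B2_def by (elim exE conjE) (rule that; assumption)

lemma if41:
  assumes "type41 n c" shows "\<not> rainbow_B2 n c"
proof
  assume rb: "rainbow_B2 n c"
  obtain X0 YY where h: "X0 \<subseteq> {1..n} \<and> 1 \<le> card X0 \<and> card X0 + 2 \<le> n \<and>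
     YY \<noteq> {} \<and> YY \<subseteq> ivl_oc X0 {1..n} \<and>
     mono_distinct c [(\<Union>Y \<in> YY. ivl_co {} Y - ivl_co X0 Y), {X0}, ivl_oc X0 {1..n} - YY, YY] \<and>
      (\<forall>Z \<in> BL n - (ivl_cc X0 {1..n} \<union> (\<Union>Y \<in> YY. ivl_co {} Y)).
          has_color_of c Z (\<Union>Y \<in> YY. ivl_co {} Y - ivl_co X0 Y) \<or> has_color_of c Z (ivl_oc X0 {1..n} - YY))"
    using assms unfolding type41_def Let_def by blast
  define F1 where "F1 = (\<Union>Y \<in> YY. ivl_co {} Y - ivl_co X0 Y)"
  define F3 where "F3 = ivl_oc X0 {1..n} - YY"
  define Fs where "Fs = [F1, {X0}, F3, YY]"
  define H where "H i Z = has_color_of c Z (Fs ! i)" for i Z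
  have md: "mono_distinct c Fs" using h unfolding Fs_def F1_def F3_def by blast
  have rest: "\<forall>Z \<in> BL n - (ivl_cc X0 {1..n} \<union> (\<Union>Y \<in> YY. ivl_co {} Y)). H 0 Z \<or> H 2 Z"
    using h unfolding H_def Fs_def F1_def F3_def by simp
  have YYs: "YY \<subseteq> ivl_oc X0 {1..n}" using h by blast
  have excl: "i = j" if "H i Z" "H j Z" "i < 4" "j < 4" for i j Z
    using hco_excl[OF md, of i j Z] that unfolding H_def Fs_def by simp
  have same: "c Z = c Z'" if "H i Z" "H i Z'" "i < 4" for i Z Z'
    using hco_same[OF md, of i Z Z'] that unfolding H_def Fs_def by simp
  have loc: "(Z = X0 \<and> H 1 Z) \<or> (X0 \<subset> Z \<and> Z \<in> YY \<and> H 3 Z) \<or> (X0 \<subset> Z \<and> H 2 Z) \<or>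
      (\<not> X0 \<subseteq> Z \<and> (\<exists>Y\<in>YY. Z \<subset> Y) \<and> H 0 Z) \<or> (\<not> X0 \<subseteq> Z \<and> \<not> (\<exists>Y\<in>YY. Z \<subset> Y) \<and> (H 0 Z \<or> H 2 Z))"
    if Z: "Z \<subseteq> {1..n}" for Z
  proof (cases "X0 \<subseteq> Z")
    case True
    show ?thesis
    proof (cases "Z = X0")
      case True then show ?thesis unfolding H_def Fs_def using hco_mem[of X0 "{X0}" c] by simp
    next
      case False
      then have XZ: "X0 \<subset> Z" using \<open>X0 \<subseteq> Z\<close> by auto
      show ?thesis
      proof (cases "Z \<in> YY")
        case True then show ?thesis using XZ hco_mem[of Z YY c] unfolding H_def Fs_def by simp
      next
        case False
        then have "Z \<in> F3" unfolding F3_def ivl_oc_def using XZ Z by auto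
        then show ?thesis using XZ hco_mem[of Z F3 c] unfolding H_def Fs_def by simp
      qed
    qed
  next
    case False
    show ?thesis
    proof (cases "\<exists>Y\<in>YY. Z \<subset> Y")
      case True
      then have "Z \<in> F1" unfolding F1_def ivl_co_def using False by auto
      then show ?thesis using False True hco_mem[of Z F1 c] unfolding H_def Fs_def by simp
    next
      case nY: False
      have "Z \<in> BL n - (ivl_cc X0 {1..n} \<union> (\<Union>Y \<in> YY. ivl_co {} Y))"
        unfolding BL_def ivl_cc_def ivl_co_def using Z False nY by auto
      then show ?thesis using rest False nY by blast
    qed
  qed
  obtain W1 W2 W3 W4 where W: "W1 \<subset> W2" "W1 \<subset> W3" "W2 \<subset> W4" "W3 \<subset> W4"
    "\<not> W2 \<subseteq> W3" "\<not> W3 \<subseteq> W2" "W4 \<in> BL n"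
    and cW: "c W1 \<noteq> c W2" "c W1 \<noteq> c W3" "c W1 \<noteq> c W4" "c W2 \<noteq> c W3" "c W2 \<noteq> c W4" "c W3 \<noteq> c W4"
    by (rule rb_obtain[OF rb])
  have WN: "W1 \<subseteq> {1..n}" "W2 \<subseteq> {1..n}" "W3 \<subseteq> {1..n}" "W4 \<subseteq> {1..n}"
    using W unfolding BL_def by auto
  have cls: "\<exists>j<4. H j Z" if "Z \<subseteq> {1..n}" for Z
  proof -
    have "H 0 Z \<or> H 1 Z \<or> H 2 Z \<or> H 3 Z" using loc[OF that] by blast
    then show ?thesis
    proof (elim disjE)
      assume "H 0 Z" then show ?thesis by (intro exI[of _ 0]) simp
    next
      assume "H 1 Z" then show ?thesis by (intro exI[of _ 1]) simp
    next
      assume "H 2 Z" then show ?thesis by (intro exI[of _ 2]) simp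
    next
      assume "H 3 Z" then show ?thesis by (intro exI[of _ 3]) simp
    qed
  qed
  obtain j1 where j1: "j1 < 4" "H j1 W1" using cls[OF WN(1)] by blast
  obtain j2 where j2: "j2 < 4" "H j2 W2" using cls[OF WN(2)] by blast
  obtain j3 where j3: "j3 < 4" "H j3 W3" using cls[OF WN(3)] by blast
  obtain j4 where j4: "j4 < 4" "H j4 W4" using cls[OF WN(4)] by blast
  have dj: "j1 \<noteq> j2" "j1 \<noteq> j3" "j1 \<noteq> j4" "j2 \<noteq> j3" "j2 \<noteq> j4" "j3 \<noteq> j4"
    using same j1 j2 j3 j4 cW by metis+
  have ex: "H i W1 \<or> H i W2 \<or> H i W3 \<or> H i W4" if "i < 4" for i
    using pig[OF j1(1) j2(1) j3(1) j4(1) dj that] j1 j2 j3 j4 by metis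
  have uq: "\<not> (H i Wa \<and> H i Wb)" if "i < 4" "c Wa \<noteq> c Wb" for i Wa Wb
    using same that by metis
  have S1: "Z = X0" if "Z \<subseteq> {1..n}" "H 1 Z" for Z
  proof -
    have "\<not> H 0 Z" "\<not> H 2 Z" "\<not> H 3 Z" using excl[OF that(2), of 0] excl[OF that(2), of 2] excl[OF that(2), of 3] by auto
    then show ?thesis using loc[OF that(1)] that(2) by blast
  qed
  have S3: "X0 \<subset> Z \<and> Z \<in> YY" if "Z \<subseteq> {1..n}" "H 3 Z" for Z
  proof -
    have "\<not> H 0 Z" "\<not> H 1 Z" "\<not> H 2 Z" using excl[OF that(2), of 0] excl[OF that(2), of 1] excl[OF that(2), of 2] by auto
    then show ?thesis using loc[OF that(1)] that(2) by blast
  qed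
  have S0: "\<not> X0 \<subseteq> Z" if "Z \<subseteq> {1..n}" "H 0 Z" for Z
  proof -
    have "\<not> H 1 Z" "\<not> H 2 Z" "\<not> H 3 Z" using excl[OF that(2), of 1] excl[OF that(2), of 2] excl[OF that(2), of 3] by auto
    then show ?thesis using loc[OF that(1)] that(2) by blast
  qed
  have S2: "X0 \<subset> Z \<or> (\<not> X0 \<subseteq> Z \<and> \<not> (\<exists>Y\<in>YY. Z \<subset> Y))" if "Z \<subseteq> {1..n}" "H 2 Z" for Z
  proof -
    have "\<not> H 0 Z" "\<not> H 1 Z" "\<not> H 3 Z" using excl[OF that(2), of 0] excl[OF that(2), of 1] excl[OF that(2), of 3] by auto
    then show ?thesis using loc[OF that(1)] that(2) by blast
  qed
  have SQ: "H 0 Z" if "Z \<subseteq> {1..n}" "\<not> X0 \<subseteq> Z" "Y \<in> YY" "Z \<subset> Y" for Z Y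
    using loc[OF that(1)] that by blast
  have sub: "W1 \<subseteq> W4" "W2 \<subseteq> W4" "W3 \<subseteq> W4" "W1 \<subseteq> W2" "W1 \<subseteq> W3" using W by auto
  have c3: "X0 \<subset> W1 \<or> X0 \<subset> W2 \<or> X0 \<subset> W3 \<or> X0 \<subset> W4" using ex[of 3] S3 WN by auto
  have c1: "X0 = W1 \<or> X0 = W2 \<or> X0 = W3 \<or> X0 = W4" using ex[of 1] S1 WN by auto
  have c0: "\<not> X0 \<subseteq> W1 \<or> \<not> X0 \<subseteq> W2 \<or> \<not> X0 \<subseteq> W3 \<or> \<not> X0 \<subseteq> W4" using ex[of 0] S0 WN by auto
  have c0': "\<not> X0 \<subseteq> W4" if "X0 = W1" using c0 that sub by auto
  have "j4 = 0 \<or> j4 = 1 \<or> j4 = 2 \<or> j4 = 3" using j4 by auto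
  then show False
  proof (elim disjE)
    assume "j4 = 0"
    then have "\<not> X0 \<subseteq> W4" using S0 WN j4 by auto
    then show False using c3 sub by auto
  next
    assume "j4 = 1"
    then have "W4 = X0" using S1 WN j4 by auto
    then show False using c3 sub by auto
  next
    assume j42: "j4 = 2"
    have "X0 \<subseteq> W4" using c3 sub by auto
    then have n1: "X0 \<noteq> W1" using c0' by auto
    have n4: "X0 \<noteq> W4" using c3 sub by auto
    have n3: "\<not> H 3 W4" using excl[of 3 W4 2] j4 j42 by auto
    then have c3': "X0 \<subset> W1 \<or> X0 \<subset> W2 \<or> X0 \<subset> W3" using ex[of 3] S3 WN by auto
    show False using c1 n1 n4 c3' W by auto
  next
    assume j43: "j4 = 3"
    then have W4Y: "W4 \<in> YY" using S3 WN j4 by auto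
    have n4: "X0 \<noteq> W4" using S3 WN j4 j43 by auto
    have "X0 \<noteq> W1"
    proof
      assume "X0 = W1"
      then show False using c0' S3 WN j4 j43 by auto
    qed
    then have "X0 = W2 \<or> X0 = W3" using c1 n4 by auto
    then show False
    proof
      assume X2: "X0 = W2"
      have "H 0 W1" using SQ[OF WN(1) _ W4Y] X2 W by auto
      moreover have "H 0 W3" using SQ[OF WN(3) _ W4Y] X2 W by auto
      ultimately show False using uq[of 0 W1 W3] cW by auto
    next
      assume X3: "X0 = W3"
      have "H 0 W1" using SQ[OF WN(1) _ W4Y] X3 W by auto
      moreover have "H 0 W2" using SQ[OF WN(2) _ W4Y] X3 W by auto
      ultimately show False using uq[of 0 W1 W2] cW by auto
    qed
  qed
qed

lemma if42:
  assumes "type42 n c" shows "\<not> rainbow_B2 n c"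
proof
  assume rb: "rainbow_B2 n c"
  obtain Y0 XX where h: "Y0 \<subseteq> {1..n} \<and> 2 \<le> card Y0 \<and> card Y0 + 1 \<le> n \<and>
     XX \<noteq> {} \<and> XX \<subseteq> ivl_oo {} Y0 \<and>
     mono_distinct c [(\<Union>X \<in> XX. ivl_oc X {1..n} - ivl_oc X Y0), {Y0}, ivl_co {} Y0 - XX, XX] \<and>
      (\<forall>Z \<in> BL n - (ivl_cc {} Y0 \<union> (\<Union>X \<in> XX. ivl_oc X {1..n})).
          has_color_of c Z (\<Union>X \<in> XX. ivl_oc X {1..n} - ivl_oc X Y0) \<or> has_color_of c Z (ivl_co {} Y0 - XX))"
    using assms unfolding type42_def Let_def by blast
  define F1 where "F1 = (\<Union>X \<in> XX. ivl_oc X {1..n} - ivl_oc X Y0)"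
  define F2 where "F2 = {Y0}"
  define F3 where "F3 = ivl_co {} Y0 - XX"
  define F4 where "F4 = XX"
  define Fs where "Fs = [F1, F2, F3, F4]"
  define H where "H i Z = has_color_of c Z (Fs ! i)" for i Z
  have md: "mono_distinct c Fs" using h unfolding Fs_def F1_def F2_def F3_def F4_def by blast
  have rest: "\<forall>Z \<in> BL n - (ivl_cc {} Y0 \<union> (\<Union>X \<in> XX. ivl_oc X {1..n})). H 0 Z \<or> H 2 Z"
    using h unfolding H_def Fs_def F1_def F2_def F3_def F4_def by simp
  have excl: "i = j" if "H i Z" "H j Z" "i < 4" "j < 4" for i j Z
    using hco_excl[OF md, of i j Z] that unfolding H_def Fs_def by simp
  have same: "c Z = c Z'" if "H i Z" "H i Z'" "i < 4" for i Z Z'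
    using hco_same[OF md, of i Z Z'] that unfolding H_def Fs_def by simp
  have mem: "H i Z" if "Z \<in> Fs ! i" for i Z
    using hco_mem[OF that] unfolding H_def .
  have loc: "(Z = Y0 \<and> H 1 Z) \<or> (Z \<subset> Y0 \<and> Z \<in> XX \<and> H 3 Z) \<or> (Z \<subset> Y0 \<and> H 2 Z) \<or>
      (\<not> Z \<subseteq> Y0 \<and> (\<exists>X\<in>XX. X \<subset> Z) \<and> H 0 Z) \<or> (\<not> Z \<subseteq> Y0 \<and> \<not> (\<exists>X\<in>XX. X \<subset> Z) \<and> (H 0 Z \<or> H 2 Z))"
    if Z: "Z \<subseteq> {1..n}" for Z
  proof (cases "Z \<subseteq> Y0")
    case True
    show ?thesis
    proof (cases "Z = Y0")
      case True then show ?thesis using mem[of Y0 1] unfolding Fs_def F2_def by simp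
    next
      case False
      then have XZ: "Z \<subset> Y0" using \<open>Z \<subseteq> Y0\<close> by auto
      show ?thesis
      proof (cases "Z \<in> XX")
        case True then show ?thesis using XZ mem[of Z 3] unfolding Fs_def F4_def by simp
      next
        case False
        then have "Z \<in> F3" unfolding F3_def ivl_co_def using XZ by auto
        then show ?thesis using XZ mem[of Z 2] unfolding Fs_def by simp
      qed
    qed
  next
    case False
    show ?thesis
    proof (cases "\<exists>X\<in>XX. X \<subset> Z")
      case True
      then have "Z \<in> F1" unfolding F1_def ivl_oc_def using False Z by auto
      then show ?thesis using False True mem[of Z 0] unfolding Fs_def by simp
    next
      case nY: False
      have "Z \<in> BL n - (ivl_cc {} Y0 \<union> (\<Union>X \<in> XX. ivl_oc X {1..n}))"
        unfolding BL_def ivl_cc_def ivl_oc_def using Z False nY by auto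
      then show ?thesis using rest False nY by blast
    qed
  qed
  obtain W1 W2 W3 W4 where W: "W1 \<subset> W2" "W1 \<subset> W3" "W2 \<subset> W4" "W3 \<subset> W4"
    "\<not> W2 \<subseteq> W3" "\<not> W3 \<subseteq> W2" "W4 \<in> BL n"
    and cW: "c W1 \<noteq> c W2" "c W1 \<noteq> c W3" "c W1 \<noteq> c W4" "c W2 \<noteq> c W3" "c W2 \<noteq> c W4" "c W3 \<noteq> c W4"
    by (rule rb_obtain[OF rb])
  have WN: "W1 \<subseteq> {1..n}" "W2 \<subseteq> {1..n}" "W3 \<subseteq> {1..n}" "W4 \<subseteq> {1..n}"
    using W unfolding BL_def by auto
  have cls: "\<exists>j<4. H j Z" if "Z \<subseteq> {1..n}" for Z
  proof -
    have "H 0 Z \<or> H 1 Z \<or> H 2 Z \<or> H 3 Z" using loc[OF that] by blast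
    then show ?thesis
    proof (elim disjE)
      assume "H 0 Z" then show ?thesis by (intro exI[of _ 0]) simp
    next
      assume "H 1 Z" then show ?thesis by (intro exI[of _ 1]) simp
    next
      assume "H 2 Z" then show ?thesis by (intro exI[of _ 2]) simp
    next
      assume "H 3 Z" then show ?thesis by (intro exI[of _ 3]) simp
    qed
  qed
  obtain j1 where j1: "j1 < 4" "H j1 W1" using cls[OF WN(1)] by blast
  obtain j2 where j2: "j2 < 4" "H j2 W2" using cls[OF WN(2)] by blast
  obtain j3 where j3: "j3 < 4" "H j3 W3" using cls[OF WN(3)] by blast
  obtain j4 where j4: "j4 < 4" "H j4 W4" using cls[OF WN(4)] by blast
  have dj: "j1 \<noteq> j2" "j1 \<noteq> j3" "j1 \<noteq> j4" "j2 \<noteq> j3" "j2 \<noteq> j4" "j3 \<noteq> j4"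
    using same j1 j2 j3 j4 cW by metis+
  have ex: "H i W1 \<or> H i W2 \<or> H i W3 \<or> H i W4" if "i < 4" for i
    using pig[OF j1(1) j2(1) j3(1) j4(1) dj that] j1 j2 j3 j4 by metis
  have uq: "\<not> (H i Wa \<and> H i Wb)" if "i < 4" "c Wa \<noteq> c Wb" for i Wa Wb
    using same that by metis
  have sub: "W1 \<subseteq> W4" "W2 \<subseteq> W4" "W3 \<subseteq> W4" "W1 \<subseteq> W2" "W1 \<subseteq> W3" using W by auto
  have S1: "Z = Y0" if "Z \<subseteq> {1..n}" "H 1 Z" for Z
  proof -
    have "\<not> H 0 Z" "\<not> H 2 Z" "\<not> H 3 Z" using excl[OF that(2), of 0] excl[OF that(2), of 2] excl[OF that(2), of 3] by auto
    then show ?thesis using loc[OF that(1)] that(2) by blast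
  qed
  have S3: "Z \<subset> Y0 \<and> Z \<in> XX" if "Z \<subseteq> {1..n}" "H 3 Z" for Z
  proof -
    have "\<not> H 0 Z" "\<not> H 1 Z" "\<not> H 2 Z" using excl[OF that(2), of 0] excl[OF that(2), of 1] excl[OF that(2), of 2] by auto
    then show ?thesis using loc[OF that(1)] that(2) by blast
  qed
  have S0: "\<not> Z \<subseteq> Y0" if "Z \<subseteq> {1..n}" "H 0 Z" for Z
  proof -
    have "\<not> H 1 Z" "\<not> H 2 Z" "\<not> H 3 Z" using excl[OF that(2), of 1] excl[OF that(2), of 2] excl[OF that(2), of 3] by auto
    then show ?thesis using loc[OF that(1)] that(2) by blast
  qed
  have S2: "Z \<subset> Y0 \<or> (\<not> Z \<subseteq> Y0 \<and> \<not> (\<exists>X\<in>XX. X \<subset> Z))" if "Z \<subseteq> {1..n}" "H 2 Z" for Z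
  proof -
    have "\<not> H 0 Z" "\<not> H 1 Z" "\<not> H 3 Z" using excl[OF that(2), of 0] excl[OF that(2), of 1] excl[OF that(2), of 3] by auto
    then show ?thesis using loc[OF that(1)] that(2) by blast
  qed
  have SQ: "H 0 Z" if "Z \<subseteq> {1..n}" "\<not> Z \<subseteq> Y0" "X \<in> XX" "X \<subset> Z" for Z X
    using loc[OF that(1)] that by blast
  have c3: "H 3 W1 \<or> H 3 W2 \<or> H 3 W3 \<or> H 3 W4" using ex[of 3] by auto
  have c3s: "W1 \<subset> Y0 \<or> W2 \<subset> Y0 \<or> W3 \<subset> Y0 \<or> W4 \<subset> Y0" using c3 S3 WN by blast
  have c1: "Y0 = W1 \<or> Y0 = W2 \<or> Y0 = W3 \<or> Y0 = W4" using ex[of 1] S1 WN by auto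
  have c0: "\<not> W1 \<subseteq> Y0 \<or> \<not> W2 \<subseteq> Y0 \<or> \<not> W3 \<subseteq> Y0 \<or> \<not> W4 \<subseteq> Y0" using ex[of 0] S0 WN by auto
  have "j1 = 0 \<or> j1 = 1 \<or> j1 = 2 \<or> j1 = 3" using j1 by auto
  then show False
  proof (elim disjE)
    assume "j1 = 0"
    then have "\<not> W1 \<subseteq> Y0" using S0 WN j1 by auto
    then show False using c3s sub by auto
  next
    assume "j1 = 1"
    then have "W1 = Y0" using S1 WN j1 by auto
    then show False using c3s sub by auto
  next
    assume j12: "j1 = 2"
    have W1Y: "W1 \<subseteq> Y0" using c3s sub by auto
    have n1: "Y0 \<noteq> W1" using c3s sub by auto
    have n4: "Y0 \<noteq> W4" using c0 sub by auto
    have n31: "\<not> H 3 W1" using excl[of 3 W1 2] j1 j12 by auto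
    have n34: "\<not> H 3 W4"
    proof
      assume "H 3 W4"
      then have "W4 \<subset> Y0" using S3 WN by auto
      then show False using c1 n1 n4 sub by auto
    qed
    have "H 3 W2 \<or> H 3 W3" using c3 n31 n34 by auto
    then have "W2 \<subset> Y0 \<or> W3 \<subset> Y0" using S3 WN by blast
    moreover have "Y0 = W2 \<or> Y0 = W3" using c1 n1 n4 by auto
    ultimately show False using W by auto
  next
    assume j13: "j1 = 3"
    then have W1X: "W1 \<in> XX" using S3 WN j1 by auto
    have W4Y: "\<not> W4 \<subseteq> Y0" using c0 sub by auto
    have h4: "H 0 W4" using SQ[OF WN(4) W4Y W1X] W by auto
    have n1: "Y0 \<noteq> W1" using S3 WN j1 j13 by auto
    have n4: "Y0 \<noteq> W4" using W4Y by auto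
    then have "Y0 = W2 \<or> Y0 = W3" using c1 n1 by auto
    then show False
    proof
      assume Y2: "Y0 = W2"
      have "H 0 W3" using SQ[OF WN(3) _ W1X] Y2 W by auto
      then show False using uq[of 0 W3 W4] cW h4 by auto
    next
      assume Y3: "Y0 = W3"
      have "H 0 W2" using SQ[OF WN(2) _ W1X] Y3 W by auto
      then show False using uq[of 0 W2 W4] cW h4 by auto
    qed
  qed
qed

lemma if31:
  assumes "type31 n c" shows "\<not> rainbow_B2 n c"
proof
  assume rb: "rainbow_B2 n c"
  obtain X0 Y0 where h: "{} \<subset> X0 \<and> X0 \<subset> Y0 \<and> Y0 \<subset> {1..n} \<and> card Y0 \<ge> card X0 + 2 \<and>
     mono_distinct c [ivl_cc {} Y0 - ivl_cc X0 Y0, {X0} \<union> (up_fam n X0 Y0 - ivl_oc X0 Y0), ivl_oo X0 Y0, {Y0}] \<and>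
      (\<forall>Z \<in> BL n - (ivl_cc {} Y0 \<union> up_fam n X0 Y0).
          has_color_of c Z (ivl_cc {} Y0 - ivl_cc X0 Y0) \<or> has_color_of c Z ({X0} \<union> (up_fam n X0 Y0 - ivl_oc X0 Y0)))"
    using assms unfolding type31_def Let_def by blast
  define F1 where "F1 = ivl_cc {} Y0 - ivl_cc X0 Y0"
  define F2 where "F2 = {X0} \<union> (up_fam n X0 Y0 - ivl_oc X0 Y0)"
  define F3 where "F3 = ivl_oo X0 Y0"
  define F4 where "F4 = {Y0}"
  have XY: "X0 \<subset> Y0" using h by blast
  define Fs where "Fs = [F1, F2, F3, F4]"
  define H where "H i Z = has_color_of c Z (Fs ! i)" for i Z
  have md: "mono_distinct c Fs" using h unfolding Fs_def F1_def F2_def F3_def F4_def by blast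
  have rest: "\<forall>Z \<in> BL n - (ivl_cc {} Y0 \<union> up_fam n X0 Y0). H 0 Z \<or> H 1 Z"
    using h unfolding H_def Fs_def F1_def F2_def F3_def F4_def by simp
  have excl: "i = j" if "H i Z" "H j Z" "i < 4" "j < 4" for i j Z
    using hco_excl[OF md, of i j Z] that unfolding H_def Fs_def by simp
  have same: "c Z = c Z'" if "H i Z" "H i Z'" "i < 4" for i Z Z'
    using hco_same[OF md, of i Z Z'] that unfolding H_def Fs_def by simp
  have mem: "H i Z" if "Z \<in> Fs ! i" for i Z
    using hco_mem[OF that] unfolding H_def .
  have loc: "(Z = Y0 \<and> H 3 Z) \<or> (X0 \<subset> Z \<and> Z \<subset> Y0 \<and> H 2 Z) \<or> (Z = X0 \<and> H 1 Z) \<or>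
      (Z \<subseteq> Y0 \<and> \<not> X0 \<subseteq> Z \<and> H 0 Z) \<or> (\<not> Z \<subseteq> Y0 \<and> X0 \<subset> Z \<and> Z \<inter> (Y0 - X0) \<noteq> {} \<and> H 1 Z) \<or>
      (\<not> Z \<subseteq> Y0 \<and> \<not> (X0 \<subset> Z \<and> Z \<inter> (Y0 - X0) \<noteq> {}) \<and> (H 0 Z \<or> H 1 Z))"
    if Z: "Z \<subseteq> {1..n}" for Z
  proof (cases "Z \<subseteq> Y0")
    case True
    show ?thesis
    proof (cases "X0 \<subseteq> Z")
      case XZ: True
      show ?thesis
      proof (cases "Z = X0")
        case True then show ?thesis using mem[of X0 1] unfolding Fs_def F2_def by simp
      next
        case nX: False
        show ?thesis
        proof (cases "Z = Y0")
          case True then show ?thesis using mem[of Y0 3] unfolding Fs_def F4_def by simp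
        next
          case False
          then have "Z \<in> F3" unfolding F3_def ivl_oo_def using XZ nX \<open>Z \<subseteq> Y0\<close> by auto
          then show ?thesis using mem[of Z 2] unfolding Fs_def F3_def ivl_oo_def by simp
        qed
      qed
    next
      case False
      then have "Z \<in> F1" unfolding F1_def ivl_cc_def using \<open>Z \<subseteq> Y0\<close> by auto
      then show ?thesis using False \<open>Z \<subseteq> Y0\<close> mem[of Z 0] unfolding Fs_def by simp
    qed
  next
    case False
    show ?thesis
    proof (cases "X0 \<subset> Z \<and> Z \<inter> (Y0 - X0) \<noteq> {}")
      case True
      then have "Z \<in> F2" unfolding F2_def up_fam_def ivl_oc_def using False Z by auto
      then show ?thesis using False True mem[of Z 1] unfolding Fs_def by simp
    next
      case nY: False
      have "Z \<in> BL n - (ivl_cc {} Y0 \<union> up_fam n X0 Y0)"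
        unfolding BL_def ivl_cc_def up_fam_def ivl_oc_def using Z False nY by auto
      then show ?thesis using rest False nY by blast
    qed
  qed
  obtain W1 W2 W3 W4 where W: "W1 \<subset> W2" "W1 \<subset> W3" "W2 \<subset> W4" "W3 \<subset> W4"
    "\<not> W2 \<subseteq> W3" "\<not> W3 \<subseteq> W2" "W4 \<in> BL n"
    and cW: "c W1 \<noteq> c W2" "c W1 \<noteq> c W3" "c W1 \<noteq> c W4" "c W2 \<noteq> c W3" "c W2 \<noteq> c W4" "c W3 \<noteq> c W4"
    by (rule rb_obtain[OF rb])
  have WN: "W1 \<subseteq> {1..n}" "W2 \<subseteq> {1..n}" "W3 \<subseteq> {1..n}" "W4 \<subseteq> {1..n}"
    using W unfolding BL_def by auto
  have cls: "\<exists>j<4. H j Z" if "Z \<subseteq> {1..n}" for Z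
  proof -
    have "H 0 Z \<or> H 1 Z \<or> H 2 Z \<or> H 3 Z" using loc[OF that] by blast
    then show ?thesis
    proof (elim disjE)
      assume "H 0 Z" then show ?thesis by (intro exI[of _ 0]) simp
    next
      assume "H 1 Z" then show ?thesis by (intro exI[of _ 1]) simp
    next
      assume "H 2 Z" then show ?thesis by (intro exI[of _ 2]) simp
    next
      assume "H 3 Z" then show ?thesis by (intro exI[of _ 3]) simp
    qed
  qed
  obtain j1 where j1: "j1 < 4" "H j1 W1" using cls[OF WN(1)] by blast
  obtain j2 where j2: "j2 < 4" "H j2 W2" using cls[OF WN(2)] by blast
  obtain j3 where j3: "j3 < 4" "H j3 W3" using cls[OF WN(3)] by blast
  obtain j4 where j4: "j4 < 4" "H j4 W4" using cls[OF WN(4)] by blast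
  have dj: "j1 \<noteq> j2" "j1 \<noteq> j3" "j1 \<noteq> j4" "j2 \<noteq> j3" "j2 \<noteq> j4" "j3 \<noteq> j4"
    using same j1 j2 j3 j4 cW by metis+
  have ex: "H i W1 \<or> H i W2 \<or> H i W3 \<or> H i W4" if "i < 4" for i
    using pig[OF j1(1) j2(1) j3(1) j4(1) dj that] j1 j2 j3 j4 by metis
  have uq: "\<not> (H i Wa \<and> H i Wb)" if "i < 4" "c Wa \<noteq> c Wb" for i Wa Wb
    using same that by metis
  have sub: "W1 \<subseteq> W4" "W2 \<subseteq> W4" "W3 \<subseteq> W4" "W1 \<subseteq> W2" "W1 \<subseteq> W3" using W by auto
  have hX0: "H 1 X0" using mem[of X0 1] unfolding Fs_def F2_def by simp
  have hY0: "H 3 Y0" using mem[of Y0 3] unfolding Fs_def F4_def by simp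
  have S3: "Z = Y0" if "Z \<subseteq> {1..n}" "H 3 Z" for Z
  proof -
    have "\<not> H 0 Z" "\<not> H 1 Z" "\<not> H 2 Z" using excl[OF that(2), of 0] excl[OF that(2), of 1] excl[OF that(2), of 2] by auto
    then show ?thesis using loc[OF that(1)] that(2) by blast
  qed
  have S2: "X0 \<subset> Z \<and> Z \<subset> Y0" if "Z \<subseteq> {1..n}" "H 2 Z" for Z
  proof -
    have "\<not> H 0 Z" "\<not> H 1 Z" "\<not> H 3 Z" using excl[OF that(2), of 0] excl[OF that(2), of 1] excl[OF that(2), of 3] by auto
    then show ?thesis using loc[OF that(1)] that(2) by blast
  qed
  have S1: "Z = X0 \<or> \<not> Z \<subseteq> Y0" if "Z \<subseteq> {1..n}" "H 1 Z" for Z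
  proof -
    have "\<not> H 0 Z" "\<not> H 2 Z" "\<not> H 3 Z" using excl[OF that(2), of 0] excl[OF that(2), of 2] excl[OF that(2), of 3] by auto
    then show ?thesis using loc[OF that(1)] that(2) by blast
  qed
  have S0: "(Z \<subseteq> Y0 \<and> \<not> X0 \<subseteq> Z) \<or> (\<not> Z \<subseteq> Y0 \<and> \<not> (X0 \<subset> Z \<and> Z \<inter> (Y0 - X0) \<noteq> {}))" if "Z \<subseteq> {1..n}" "H 0 Z" for Z
  proof -
    have "\<not> H 1 Z" "\<not> H 2 Z" "\<not> H 3 Z" using excl[OF that(2), of 1] excl[OF that(2), of 2] excl[OF that(2), of 3] by auto
    then show ?thesis using loc[OF that(1)] that(2) by blast
  qed
  have c3: "Y0 = W1 \<or> Y0 = W2 \<or> Y0 = W3 \<or> Y0 = W4" using ex[of 3] S3 WN by auto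
  have c2: "H 2 W1 \<or> H 2 W2 \<or> H 2 W3 \<or> H 2 W4" using ex[of 2] by auto
  have c1: "H 1 W1 \<or> H 1 W2 \<or> H 1 W3 \<or> H 1 W4" using ex[of 1] by auto
  have c0: "H 0 W1 \<or> H 0 W2 \<or> H 0 W3 \<or> H 0 W4" using ex[of 0] by auto
  have "j4 = 0 \<or> j4 = 1 \<or> j4 = 2 \<or> j4 = 3" using j4 by auto
  then show False
  proof (elim disjE)
    assume j40: "j4 = 0"
    have n4: "Y0 \<noteq> W4" using excl[of 3 W4 0] hY0 j4 j40 by auto
    then have "Y0 \<subseteq> W4" using c3 sub by auto
    then have a1: "X0 \<subset> W4" using XY by auto
    have a2: "W4 \<inter> (Y0 - X0) \<noteq> {}" using \<open>Y0 \<subseteq> W4\<close> XY by auto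
    show False using S0[OF WN(4)] j4 j40 a1 a2 \<open>Y0 \<subseteq> W4\<close> XY by auto
  next
    assume j42: "j4 = 2"
    have "X0 \<subset> W4" "W4 \<subset> Y0" using S2 WN j4 j42 by auto
    then show False using c3 sub by auto
  next
    assume j41: "j4 = 1"
    have n2: "\<not> H 2 W4" using excl[of 2 W4 1] j4 j41 by auto
    then obtain Z3 where Z3: "Z3 = W1 \<or> Z3 = W2 \<or> Z3 = W3" "H 2 Z3" using c2 by blast
    have Z3N: "Z3 \<subseteq> {1..n}" using Z3 WN by auto
    have Z3s: "X0 \<subset> Z3" "Z3 \<subset> Y0" using S2[OF Z3N Z3(2)] by auto
    have W4X: "W4 \<noteq> X0" using Z3 Z3s sub by auto
    then have W4Y: "\<not> W4 \<subseteq> Y0" using S1 WN j4 j41 by auto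
    have n34: "Y0 \<noteq> W4" using W4Y by auto
    have n31: "Y0 \<noteq> W1" using Z3 Z3s sub by auto
    have "Y0 = W2 \<or> Y0 = W3" using c3 n34 n31 by auto
    then show False
    proof
      assume Y2: "Y0 = W2"
      have "Z3 \<noteq> W3" using Z3s Y2 W by auto
      moreover have "Z3 \<noteq> W2" using Z3s Y2 by auto
      ultimately have Z31: "Z3 = W1" using Z3 by auto
      have h0: "H 0 W3"
      proof -
        have "\<not> H 1 W3" using uq[of 1 W3 W4] cW j4 j41 by auto
        moreover have "\<not> H 2 W3" using uq[of 2 W1 W3] cW Z3 Z31 by auto
        moreover have "\<not> H 3 W3" using S3 WN Y2 W by auto
        moreover have "j3 = 0 \<or> j3 = 1 \<or> j3 = 2 \<or> j3 = 3" using j3 by auto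
        ultimately show ?thesis using j3 by auto
      qed
      have "\<not> W3 \<subseteq> Y0" using Y2 W by auto
      moreover have "X0 \<subset> W3" using Z3s Z31 W by auto
      moreover have "W3 \<inter> (Y0 - X0) \<noteq> {}" using Z3s Z31 W by auto
      ultimately show False using S0[OF WN(3) h0] by auto
    next
      assume Y3: "Y0 = W3"
      have "Z3 \<noteq> W2" using Z3s Y3 W by auto
      moreover have "Z3 \<noteq> W3" using Z3s Y3 by auto
      ultimately have Z31: "Z3 = W1" using Z3 by auto
      have h0: "H 0 W2"
      proof -
        have "\<not> H 1 W2" using uq[of 1 W2 W4] cW j4 j41 by auto
        moreover have "\<not> H 2 W2" using uq[of 2 W1 W2] cW Z3 Z31 by auto
        moreover have "\<not> H 3 W2" using S3 WN Y3 W by auto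
        moreover have "j2 = 0 \<or> j2 = 1 \<or> j2 = 2 \<or> j2 = 3" using j2 by auto
        ultimately show ?thesis using j2 by auto
      qed
      have "\<not> W2 \<subseteq> Y0" using Y3 W by auto
      moreover have "X0 \<subset> W2" using Z3s Z31 W by auto
      moreover have "W2 \<inter> (Y0 - X0) \<noteq> {}" using Z3s Z31 W by auto
      ultimately show False using S0[OF WN(2) h0] by auto
    qed
  next
    assume j43: "j4 = 3"
    then have W4Y: "W4 = Y0" using S3 WN j4 by auto
    have allY: "W1 \<subseteq> Y0" "W2 \<subseteq> Y0" "W3 \<subseteq> Y0" using sub W4Y by auto
    have n14: "\<not> H 1 W4" "\<not> H 0 W4" "\<not> H 2 W4"
      using excl[of 1 W4 3] excl[of 0 W4 3] excl[of 2 W4 3] j4 j43 by auto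
    have x1: "X0 = W1 \<or> X0 = W2 \<or> X0 = W3"
      using c1 n14 S1 WN allY by blast
    have x0: "\<not> X0 \<subseteq> W1 \<or> \<not> X0 \<subseteq> W2 \<or> \<not> X0 \<subseteq> W3"
      using c0 n14 S0 WN allY by blast
    have x2: "H 2 W1 \<or> H 2 W2 \<or> H 2 W3" using c2 n14 by blast
    have nX1: "X0 \<noteq> W1" using x0 sub by auto
    have n21: "\<not> H 2 W1"
    proof
      assume "H 2 W1"
      then have "X0 \<subset> W1" using S2 WN by auto
      then show False using x0 sub by auto
    qed
    show False
    proof (cases "X0 = W2")
      case True
      have "\<not> H 2 W2" using S2 WN True by auto
      then have "H 2 W3" using x2 n21 by auto
      then show False using S2 WN True W by auto
    next
      case False
      then have X3: "X0 = W3" using x1 nX1 by auto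
      have "\<not> H 2 W3" using S2 WN X3 by auto
      then have "H 2 W2" using x2 n21 by auto
      then show False using S2 WN X3 W by auto
    qed
  qed

qed



lemma if32:
  assumes "type32 n c" shows "\<not> rainbow_B2 n c"
proof
  assume rb: "rainbow_B2 n c"
  obtain X0 Y0 where h: "{} \<subset> X0 \<and> X0 \<subset> Y0 \<and> Y0 \<subset> {1..n} \<and> card Y0 \<ge> card X0 + 2 \<and>
     mono_distinct c [ivl_cc X0 {1..n} - ivl_cc X0 Y0, {Y0} \<union> (down_fam X0 Y0 - ivl_co X0 Y0), ivl_oo X0 Y0, {X0}] \<and>
      (\<forall>Z \<in> BL n - (ivl_cc X0 {1..n} \<union> down_fam X0 Y0).
          has_color_of c Z (ivl_cc X0 {1..n} - ivl_cc X0 Y0) \<or> has_color_of c Z ({Y0} \<union> (down_fam X0 Y0 - ivl_co X0 Y0)))"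
    using assms unfolding type32_def Let_def by blast
  define F1 where "F1 = ivl_cc X0 {1..n} - ivl_cc X0 Y0"
  define F2 where "F2 = {Y0} \<union> (down_fam X0 Y0 - ivl_co X0 Y0)"
  define F3 where "F3 = ivl_oo X0 Y0"
  define F4 where "F4 = {X0}"
  have XY: "X0 \<subset> Y0" using h by blast
  define Fs where "Fs = [F1, F2, F3, F4]"
  define H where "H i Z = has_color_of c Z (Fs ! i)" for i Z
  have md: "mono_distinct c Fs" using h unfolding Fs_def F1_def F2_def F3_def F4_def by blast
  have rest: "\<forall>Z \<in> BL n - (ivl_cc X0 {1..n} \<union> down_fam X0 Y0). H 0 Z \<or> H 1 Z"
    using h unfolding H_def Fs_def F1_def F2_def F3_def F4_def by simp
  have excl: "i = j" if "H i Z" "H j Z" "i < 4" "j < 4" for i j Z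
    using hco_excl[OF md, of i j Z] that unfolding H_def Fs_def by simp
  have same: "c Z = c Z'" if "H i Z" "H i Z'" "i < 4" for i Z Z'
    using hco_same[OF md, of i Z Z'] that unfolding H_def Fs_def by simp
  have mem: "H i Z" if "Z \<in> Fs ! i" for i Z
    using hco_mem[OF that] unfolding H_def .
  have loc: "(Z = X0 \<and> H 3 Z) \<or> (X0 \<subset> Z \<and> Z \<subset> Y0 \<and> H 2 Z) \<or> (Z = Y0 \<and> H 1 Z) \<or>
      (X0 \<subseteq> Z \<and> \<not> Z \<subseteq> Y0 \<and> H 0 Z) \<or> (\<not> X0 \<subseteq> Z \<and> Z \<subset> Y0 \<and> \<not> (Y0 - X0 \<subseteq> Z) \<and> H 1 Z) \<or>
      (\<not> X0 \<subseteq> Z \<and> \<not> (Z \<subset> Y0 \<and> \<not> (Y0 - X0 \<subseteq> Z)) \<and> (H 0 Z \<or> H 1 Z))"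
    if Z: "Z \<subseteq> {1..n}" for Z
  proof (cases "X0 \<subseteq> Z")
    case XZ: True
    show ?thesis
    proof (cases "Z = X0")
      case True then show ?thesis using mem[of X0 3] unfolding Fs_def F4_def by simp
    next
      case nX: False
      show ?thesis
      proof (cases "Z = Y0")
        case True then show ?thesis using mem[of Y0 1] unfolding Fs_def F2_def by simp
      next
        case nY: False
        show ?thesis
        proof (cases "Z \<subseteq> Y0")
          case True
          then have "Z \<in> F3" unfolding F3_def ivl_oo_def using XZ nX nY by auto
          then show ?thesis using mem[of Z 2] unfolding Fs_def F3_def ivl_oo_def by simp
        next
          case False
          then have "Z \<in> F1" unfolding F1_def ivl_cc_def using XZ Z by auto
          then show ?thesis using False XZ mem[of Z 0] unfolding Fs_def by simp
        qed
      qed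
    qed
  next
    case False
    show ?thesis
    proof (cases "Z \<subset> Y0 \<and> \<not> (Y0 - X0 \<subseteq> Z)")
      case True
      then have "Z \<in> F2" unfolding F2_def down_fam_def ivl_co_def using False by auto
      then show ?thesis using False True mem[of Z 1] unfolding Fs_def by simp
    next
      case nY: False
      have "Z \<in> BL n - (ivl_cc X0 {1..n} \<union> down_fam X0 Y0)"
        unfolding BL_def ivl_cc_def down_fam_def ivl_co_def using Z False nY by auto
      then show ?thesis using rest False nY by blast
    qed
  qed
  obtain W1 W2 W3 W4 where W: "W1 \<subset> W2" "W1 \<subset> W3" "W2 \<subset> W4" "W3 \<subset> W4"
    "\<not> W2 \<subseteq> W3" "\<not> W3 \<subseteq> W2" "W4 \<in> BL n"
    and cW: "c W1 \<noteq> c W2" "c W1 \<noteq> c W3" "c W1 \<noteq> c W4" "c W2 \<noteq> c W3" "c W2 \<noteq> c W4" "c W3 \<noteq> c W4"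
    by (rule rb_obtain[OF rb])
  have WN: "W1 \<subseteq> {1..n}" "W2 \<subseteq> {1..n}" "W3 \<subseteq> {1..n}" "W4 \<subseteq> {1..n}"
    using W unfolding BL_def by auto
  have cls: "\<exists>j<4. H j Z" if "Z \<subseteq> {1..n}" for Z
  proof -
    have "H 0 Z \<or> H 1 Z \<or> H 2 Z \<or> H 3 Z" using loc[OF that] by blast
    then show ?thesis
    proof (elim disjE)
      assume "H 0 Z" then show ?thesis by (intro exI[of _ 0]) simp
    next
      assume "H 1 Z" then show ?thesis by (intro exI[of _ 1]) simp
    next
      assume "H 2 Z" then show ?thesis by (intro exI[of _ 2]) simp
    next
      assume "H 3 Z" then show ?thesis by (intro exI[of _ 3]) simp
    qed
  qed
  obtain j1 where j1: "j1 < 4" "H j1 W1" using cls[OF WN(1)] by blast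
  obtain j2 where j2: "j2 < 4" "H j2 W2" using cls[OF WN(2)] by blast
  obtain j3 where j3: "j3 < 4" "H j3 W3" using cls[OF WN(3)] by blast
  obtain j4 where j4: "j4 < 4" "H j4 W4" using cls[OF WN(4)] by blast
  have dj: "j1 \<noteq> j2" "j1 \<noteq> j3" "j1 \<noteq> j4" "j2 \<noteq> j3" "j2 \<noteq> j4" "j3 \<noteq> j4"
    using same j1 j2 j3 j4 cW by metis+
  have ex: "H i W1 \<or> H i W2 \<or> H i W3 \<or> H i W4" if "i < 4" for i
    using pig[OF j1(1) j2(1) j3(1) j4(1) dj that] j1 j2 j3 j4 by metis
  have uq: "\<not> (H i Wa \<and> H i Wb)" if "i < 4" "c Wa \<noteq> c Wb" for i Wa Wb
    using same that by metis
  have sub: "W1 \<subseteq> W4" "W2 \<subseteq> W4" "W3 \<subseteq> W4" "W1 \<subseteq> W2" "W1 \<subseteq> W3" using W by auto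
  have hX0: "H 3 X0" using mem[of X0 3] unfolding Fs_def F4_def by simp
  have S3: "Z = X0" if "Z \<subseteq> {1..n}" "H 3 Z" for Z
  proof -
    have "\<not> H 0 Z" "\<not> H 1 Z" "\<not> H 2 Z" using excl[OF that(2), of 0] excl[OF that(2), of 1] excl[OF that(2), of 2] by auto
    then show ?thesis using loc[OF that(1)] that(2) by blast
  qed
  have S2: "X0 \<subset> Z \<and> Z \<subset> Y0" if "Z \<subseteq> {1..n}" "H 2 Z" for Z
  proof -
    have "\<not> H 0 Z" "\<not> H 1 Z" "\<not> H 3 Z" using excl[OF that(2), of 0] excl[OF that(2), of 1] excl[OF that(2), of 3] by auto
    then show ?thesis using loc[OF that(1)] that(2) by blast
  qed
  have S1: "Z = Y0 \<or> \<not> X0 \<subseteq> Z" if "Z \<subseteq> {1..n}" "H 1 Z" for Z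
  proof -
    have "\<not> H 0 Z" "\<not> H 2 Z" "\<not> H 3 Z" using excl[OF that(2), of 0] excl[OF that(2), of 2] excl[OF that(2), of 3] by auto
    then show ?thesis using loc[OF that(1)] that(2) by blast
  qed
  have S0: "(X0 \<subseteq> Z \<and> \<not> Z \<subseteq> Y0) \<or> (\<not> X0 \<subseteq> Z \<and> \<not> (Z \<subset> Y0 \<and> \<not> (Y0 - X0 \<subseteq> Z)))" if "Z \<subseteq> {1..n}" "H 0 Z" for Z
  proof -
    have "\<not> H 1 Z" "\<not> H 2 Z" "\<not> H 3 Z" using excl[OF that(2), of 1] excl[OF that(2), of 2] excl[OF that(2), of 3] by auto
    then show ?thesis using loc[OF that(1)] that(2) by blast
  qed
  have c3: "X0 = W1 \<or> X0 = W2 \<or> X0 = W3 \<or> X0 = W4" using ex[of 3] S3 WN by auto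
  have c2: "H 2 W1 \<or> H 2 W2 \<or> H 2 W3 \<or> H 2 W4" using ex[of 2] by auto
  have c1: "H 1 W1 \<or> H 1 W2 \<or> H 1 W3 \<or> H 1 W4" using ex[of 1] by auto
  have c0: "H 0 W1 \<or> H 0 W2 \<or> H 0 W3 \<or> H 0 W4" using ex[of 0] by auto
  have "j1 = 0 \<or> j1 = 1 \<or> j1 = 2 \<or> j1 = 3" using j1 by auto
  then show False
  proof (elim disjE)
    assume j12: "j1 = 2"
    have "X0 \<subset> W1" using S2 WN j1 j12 by auto
    then show False using c3 sub by auto
  next
    assume j10: "j1 = 0"
    have n1: "X0 \<noteq> W1" using excl[of 3 W1 0] hX0 j1 j10 by auto
    then have W1X: "W1 \<subset> X0" using c3 W by auto
    show False using S0[OF WN(1)] j1 j10 W1X XY by auto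
  next
    assume j11: "j1 = 1"
    have n2: "\<not> H 2 W1" using excl[of 2 W1 1] j1 j11 by auto
    then obtain Z3 where Z3: "Z3 = W2 \<or> Z3 = W3 \<or> Z3 = W4" "H 2 Z3" using c2 by blast
    have Z3N: "Z3 \<subseteq> {1..n}" using Z3 WN by auto
    have Z3s: "X0 \<subset> Z3" "Z3 \<subset> Y0" using S2[OF Z3N Z3(2)] by auto
    have W1Y: "W1 \<noteq> Y0" using Z3 Z3s sub by auto
    then have W1X: "\<not> X0 \<subseteq> W1" using S1 WN j1 j11 by auto
    have n31: "X0 \<noteq> W1" using W1X by auto
    have n34: "X0 \<noteq> W4" using Z3 Z3s sub by auto
    have "X0 = W2 \<or> X0 = W3" using c3 n34 n31 by auto
    then show False
    proof
      assume X2: "X0 = W2"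
      have "Z3 \<noteq> W3" using Z3s X2 W by auto
      moreover have "Z3 \<noteq> W2" using Z3s X2 by auto
      ultimately have Z34: "Z3 = W4" using Z3 by auto
      have h0: "H 0 W3"
      proof -
        have "\<not> H 1 W3" using uq[of 1 W1 W3] cW j1 j11 by auto
        moreover have "\<not> H 2 W3" using uq[of 2 W3 W4] cW Z3 Z34 by auto
        moreover have "\<not> H 3 W3" using S3 WN X2 W by auto
        moreover have "j3 = 0 \<or> j3 = 1 \<or> j3 = 2 \<or> j3 = 3" using j3 by auto
        ultimately show ?thesis using j3 by auto
      qed
      have "\<not> X0 \<subseteq> W3" using X2 W by auto
      moreover have "W3 \<subset> Y0" using Z3s Z34 W by auto
      moreover have "\<not> (Y0 - X0 \<subseteq> W3)" using Z3s Z34 W by auto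
      ultimately show False using S0[OF WN(3) h0] by auto
    next
      assume X3: "X0 = W3"
      have "Z3 \<noteq> W2" using Z3s X3 W by auto
      moreover have "Z3 \<noteq> W3" using Z3s X3 by auto
      ultimately have Z34: "Z3 = W4" using Z3 by auto
      have h0: "H 0 W2"
      proof -
        have "\<not> H 1 W2" using uq[of 1 W1 W2] cW j1 j11 by auto
        moreover have "\<not> H 2 W2" using uq[of 2 W2 W4] cW Z3 Z34 by auto
        moreover have "\<not> H 3 W2" using S3 WN X3 W by auto
        moreover have "j2 = 0 \<or> j2 = 1 \<or> j2 = 2 \<or> j2 = 3" using j2 by auto
        ultimately show ?thesis using j2 by auto
      qed
      have "\<not> X0 \<subseteq> W2" using X3 W by auto
      moreover have "W2 \<subset> Y0" using Z3s Z34 W by auto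
      moreover have "\<not> (Y0 - X0 \<subseteq> W2)" using Z3s Z34 W by auto
      ultimately show False using S0[OF WN(2) h0] by auto
    qed
  next
    assume j13: "j1 = 3"
    then have W1X: "W1 = X0" using S3 WN j1 by auto
    have allX: "X0 \<subseteq> W2" "X0 \<subseteq> W3" "X0 \<subseteq> W4" using sub W1X by auto
    have n11: "\<not> H 1 W1" "\<not> H 0 W1" "\<not> H 2 W1"
      using excl[of 1 W1 3] excl[of 0 W1 3] excl[of 2 W1 3] j1 j13 by auto
    have y1: "Y0 = W2 \<or> Y0 = W3 \<or> Y0 = W4"
      using c1 n11 S1 WN allX by blast
    have y0: "\<not> W2 \<subseteq> Y0 \<or> \<not> W3 \<subseteq> Y0 \<or> \<not> W4 \<subseteq> Y0"
      using c0 n11 S0 WN allX by blast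
    have y2: "H 2 W2 \<or> H 2 W3 \<or> H 2 W4" using c2 n11 by blast
    have nY4: "Y0 \<noteq> W4" using y0 sub by auto
    have n24: "\<not> H 2 W4"
    proof
      assume "H 2 W4"
      then have "W4 \<subset> Y0" using S2 WN by auto
      then show False using y0 sub by auto
    qed
    show False
    proof (cases "Y0 = W2")
      case True
      have "\<not> H 2 W2" using S2 WN True by auto
      then have "H 2 W3" using y2 n24 by auto
      then show False using S2 WN True W by auto
    next
      case False
      then have Y3: "Y0 = W3" using y1 nY4 by auto
      have "\<not> H 2 W3" using S2 WN Y3 by auto
      then have "H 2 W2" using y2 n24 by auto
      then show False using S2 WN Y3 W by auto
    qed
  qed
qed



lemma if2:
  assumes "type2 n c" shows "\<not> rainbow_B2 n c"
proof
  assume rb: "rainbow_B2 n c"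
  obtain X0 Y0 where h: "{} \<subset> X0 \<and> X0 \<subset> Y0 \<and> Y0 \<subset> {1..n} \<and> card Y0 \<ge> card X0 + 2 \<and>
     mono_distinct c [ivl_cc {} Y0 - ivl_cc X0 Y0, {X0, Y0}, ivl_oo X0 Y0, ivl_cc X0 {1..n} - ivl_cc X0 Y0] \<and>
      (\<forall>Z \<in> BL n - (ivl_cc {} Y0 \<union> ivl_cc X0 {1..n}).
          has_color_of c Z (ivl_cc {} Y0 - ivl_cc X0 Y0) \<or> has_color_of c Z (ivl_cc X0 {1..n} - ivl_cc X0 Y0))"
    using assms unfolding type2_def Let_def by blast
  define F1 where "F1 = ivl_cc {} Y0 - ivl_cc X0 Y0"
  define F2 where "F2 = {X0, Y0}"
  define F3 where "F3 = ivl_oo X0 Y0"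
  define F4 where "F4 = ivl_cc X0 {1..n} - ivl_cc X0 Y0"
  have XY: "X0 \<subset> Y0" using h by blast
  define Fs where "Fs = [F1, F2, F3, F4]"
  define H where "H i Z = has_color_of c Z (Fs ! i)" for i Z
  have md: "mono_distinct c Fs" using h unfolding Fs_def F1_def F2_def F3_def F4_def by blast
  have rest: "\<forall>Z \<in> BL n - (ivl_cc {} Y0 \<union> ivl_cc X0 {1..n}). H 0 Z \<or> H 3 Z"
    using h unfolding H_def Fs_def F1_def F2_def F3_def F4_def by simp
  have excl: "i = j" if "H i Z" "H j Z" "i < 4" "j < 4" for i j Z
    using hco_excl[OF md, of i j Z] that unfolding H_def Fs_def by simp
  have same: "c Z = c Z'" if "H i Z" "H i Z'" "i < 4" for i Z Z'
    using hco_same[OF md, of i Z Z'] that unfolding H_def Fs_def by simp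
  have mem: "H i Z" if "Z \<in> Fs ! i" for i Z
    using hco_mem[OF that] unfolding H_def .
  have loc: "((Z = X0 \<or> Z = Y0) \<and> H 1 Z) \<or> (X0 \<subset> Z \<and> Z \<subset> Y0 \<and> H 2 Z) \<or> (\<not> X0 \<subseteq> Z \<and> H 0 Z) \<or>
      (\<not> Z \<subseteq> Y0 \<and> H 3 Z) \<or> (\<not> X0 \<subseteq> Z \<and> \<not> Z \<subseteq> Y0 \<and> (H 0 Z \<or> H 3 Z))"
    if Z: "Z \<subseteq> {1..n}" for Z
  proof (cases "Z \<subseteq> Y0")
    case ZY: True
    show ?thesis
    proof (cases "X0 \<subseteq> Z")
      case XZ: True
      show ?thesis
      proof (cases "Z = X0 \<or> Z = Y0")
        case True
        then have "Z \<in> F2" unfolding F2_def by auto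
        then show ?thesis using True mem[of Z 1] unfolding Fs_def by simp
      next
        case False
        then have "Z \<in> F3" unfolding F3_def ivl_oo_def using XZ ZY by auto
        then show ?thesis using mem[of Z 2] unfolding Fs_def F3_def ivl_oo_def by simp
      qed
    next
      case False
      then have "Z \<in> F1" unfolding F1_def ivl_cc_def using ZY by auto
      then show ?thesis using False mem[of Z 0] unfolding Fs_def by simp
    qed
  next
    case nZY: False
    show ?thesis
    proof (cases "X0 \<subseteq> Z")
      case True
      then have "Z \<in> F4" unfolding F4_def ivl_cc_def using nZY Z by auto
      then show ?thesis using nZY mem[of Z 3] unfolding Fs_def by simp
    next
      case False
      have "Z \<in> BL n - (ivl_cc {} Y0 \<union> ivl_cc X0 {1..n})"
        unfolding BL_def ivl_cc_def using Z False nZY by auto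
      then show ?thesis using rest False nZY by blast
    qed
  qed
  obtain W1 W2 W3 W4 where W: "W1 \<subset> W2" "W1 \<subset> W3" "W2 \<subset> W4" "W3 \<subset> W4"
    "\<not> W2 \<subseteq> W3" "\<not> W3 \<subseteq> W2" "W4 \<in> BL n"
    and cW: "c W1 \<noteq> c W2" "c W1 \<noteq> c W3" "c W1 \<noteq> c W4" "c W2 \<noteq> c W3" "c W2 \<noteq> c W4" "c W3 \<noteq> c W4"
    by (rule rb_obtain[OF rb])
  have WN: "W1 \<subseteq> {1..n}" "W2 \<subseteq> {1..n}" "W3 \<subseteq> {1..n}" "W4 \<subseteq> {1..n}"
    using W unfolding BL_def by auto
  have cls: "\<exists>j<4. H j Z" if "Z \<subseteq> {1..n}" for Z
  proof -
    have "H 0 Z \<or> H 1 Z \<or> H 2 Z \<or> H 3 Z" using loc[OF that] by blast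
    then show ?thesis
    proof (elim disjE)
      assume "H 0 Z" then show ?thesis by (intro exI[of _ 0]) simp
    next
      assume "H 1 Z" then show ?thesis by (intro exI[of _ 1]) simp
    next
      assume "H 2 Z" then show ?thesis by (intro exI[of _ 2]) simp
    next
      assume "H 3 Z" then show ?thesis by (intro exI[of _ 3]) simp
    qed
  qed
  obtain j1 where j1: "j1 < 4" "H j1 W1" using cls[OF WN(1)] by blast
  obtain j2 where j2: "j2 < 4" "H j2 W2" using cls[OF WN(2)] by blast
  obtain j3 where j3: "j3 < 4" "H j3 W3" using cls[OF WN(3)] by blast
  obtain j4 where j4: "j4 < 4" "H j4 W4" using cls[OF WN(4)] by blast
  have dj: "j1 \<noteq> j2" "j1 \<noteq> j3" "j1 \<noteq> j4" "j2 \<noteq> j3" "j2 \<noteq> j4" "j3 \<noteq> j4"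
    using same j1 j2 j3 j4 cW by metis+
  have ex: "H i W1 \<or> H i W2 \<or> H i W3 \<or> H i W4" if "i < 4" for i
    using pig[OF j1(1) j2(1) j3(1) j4(1) dj that] j1 j2 j3 j4 by metis
  have uq: "\<not> (H i Wa \<and> H i Wb)" if "i < 4" "c Wa \<noteq> c Wb" for i Wa Wb
    using same that by metis
  have sub: "W1 \<subseteq> W4" "W2 \<subseteq> W4" "W3 \<subseteq> W4" "W1 \<subseteq> W2" "W1 \<subseteq> W3" using W by auto
  have S1: "Z = X0 \<or> Z = Y0" if "Z \<subseteq> {1..n}" "H 1 Z" for Z
  proof -
    have "\<not> H 0 Z" "\<not> H 2 Z" "\<not> H 3 Z" using excl[OF that(2), of 0] excl[OF that(2), of 2] excl[OF that(2), of 3] by auto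
    then show ?thesis using loc[OF that(1)] that(2) by blast
  qed
  have S2: "X0 \<subset> Z \<and> Z \<subset> Y0" if "Z \<subseteq> {1..n}" "H 2 Z" for Z
  proof -
    have "\<not> H 0 Z" "\<not> H 1 Z" "\<not> H 3 Z" using excl[OF that(2), of 0] excl[OF that(2), of 1] excl[OF that(2), of 3] by auto
    then show ?thesis using loc[OF that(1)] that(2) by blast
  qed
  have S0: "\<not> X0 \<subseteq> Z" if "Z \<subseteq> {1..n}" "H 0 Z" for Z
  proof -
    have "\<not> H 1 Z" "\<not> H 2 Z" "\<not> H 3 Z" using excl[OF that(2), of 1] excl[OF that(2), of 2] excl[OF that(2), of 3] by auto
    then show ?thesis using loc[OF that(1)] that(2) by blast
  qed
  have S3: "\<not> Z \<subseteq> Y0" if "Z \<subseteq> {1..n}" "H 3 Z" for Z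
  proof -
    have "\<not> H 0 Z" "\<not> H 1 Z" "\<not> H 2 Z" using excl[OF that(2), of 0] excl[OF that(2), of 1] excl[OF that(2), of 2] by auto
    then show ?thesis using loc[OF that(1)] that(2) by blast
  qed
  have mid: "X0 \<subseteq> Z \<and> Z \<subseteq> Y0" if "Z \<subseteq> {1..n}" "H 1 Z \<or> H 2 Z" for Z
    using S1[OF that(1)] S2[OF that(1)] that(2) XY by auto
  have c0: "\<not> X0 \<subseteq> W1 \<or> \<not> X0 \<subseteq> W2 \<or> \<not> X0 \<subseteq> W3 \<or> \<not> X0 \<subseteq> W4" using ex[of 0] S0 WN by auto
  have c3: "\<not> W1 \<subseteq> Y0 \<or> \<not> W2 \<subseteq> Y0 \<or> \<not> W3 \<subseteq> Y0 \<or> \<not> W4 \<subseteq> Y0" using ex[of 3] S3 WN by auto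
  have midY: "Z \<subseteq> Y0" if "Z \<subseteq> {1..n}" "H 1 Z" for Z using mid[OF that(1)] that(2) by blast
  have c12: "W1 \<subseteq> Y0 \<or> W2 \<subseteq> Y0 \<or> W3 \<subseteq> Y0 \<or> W4 \<subseteq> Y0"
    using ex[of 1] midY[OF WN(1)] midY[OF WN(2)] midY[OF WN(3)] midY[OF WN(4)] by auto
  have "j1 = 0 \<or> j1 = 1 \<or> j1 = 2 \<or> j1 = 3" using j1 by auto
  then show False
  proof (elim disjE)
    assume "j1 = 1"
    then have "X0 \<subseteq> W1" using mid WN j1 by auto
    then show False using c0 sub by auto
  next
    assume "j1 = 2"
    then have "X0 \<subseteq> W1" using mid WN j1 by auto
    then show False using c0 sub by auto
  next
    assume "j1 = 3"
    then have "\<not> W1 \<subseteq> Y0" using S3 WN j1 by auto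
    then show False using c12 sub by auto
  next
    assume j10: "j1 = 0"
    have "j4 = 0 \<or> j4 = 1 \<or> j4 = 2 \<or> j4 = 3" using j4 by auto
    then show False
    proof (elim disjE)
      assume "j4 = 0" then show False using dj j10 by auto
    next
      assume "j4 = 1"
      then have "W4 \<subseteq> Y0" using mid WN j4 by auto
      then show False using c3 sub by auto
    next
      assume "j4 = 2"
      then have "W4 \<subseteq> Y0" using mid WN j4 by auto
      then show False using c3 sub by auto
    next
      assume j43: "j4 = 3"
      have "j2 = 1 \<or> j2 = 2" "j3 = 1 \<or> j3 = 2" using j2 j3 dj j10 j43 by auto
      then have "(j2 = 1 \<and> j3 = 2) \<or> (j2 = 2 \<and> j3 = 1)" using dj by auto
      then show False
      proof
        assume "j2 = 1 \<and> j3 = 2"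
        then have "W2 = X0 \<or> W2 = Y0" "X0 \<subset> W3" "W3 \<subset> Y0" using S1 S2 WN j2 j3 by auto
        then show False using W by auto
      next
        assume "j2 = 2 \<and> j3 = 1"
        then have "W3 = X0 \<or> W3 = Y0" "X0 \<subset> W2" "W2 \<subset> Y0" using S1 S2 WN j2 j3 by auto
        then show False using W by auto
      qed
    qed
  qed
qed

theorem lemma2p8:
  fixes n :: nat and c :: "nat set \<Rightarrow> nat"
  assumes "n \<ge> 4"
    and "exact_coloring n 4 c"
    and "c {} \<noteq> c {1..n}"
  shows "\<not> rainbow_B2 n c \<longleftrightarrow>
           type2 n c \<or> type31 n c \<or> type32 n c \<or> type41 n c \<or> type42 n c"
proof
  assume nrb: "\<not> rainbow_B2 n c"
  define a where "a = c {}"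
  define b where "b = c {1..n}"
  have ex: "c ` BL n = {1..4}" using assms(2) unfolding exact_coloring_def by simp
  have eB: "{} \<in> BL n" "{1..n} \<in> BL n" unfolding BL_def by auto
  have ab: "a \<in> {1..4}" "b \<in> {1..4}" "a \<noteq> b" using ex eB assms(3) unfolding a_def b_def by blast+
  have "card ({1..4::nat} - {a, b}) = 2"
  proof -
    have "{a, b} \<subseteq> {1..4::nat}" using ab by auto
    moreover have "card {a, b} = 2" using ab by auto
    ultimately show ?thesis by (simp add: card_Diff_subset)
  qed
  then obtain x y where xy: "{1..4::nat} - {a, b} = {x, y}" "x \<noteq> y" by (meson card_2_iff)
  have xy4: "x \<in> {1..4}" "y \<in> {1..4}" "x \<noteq> a" "x \<noteq> b" "y \<noteq> a" "y \<noteq> b"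
    using xy by blast+
  have sub: "{a, b} \<subseteq> {1..4::nat}" using ab by blast
  have "{1..4::nat} = {a, b} \<union> ({1..4} - {a, b})" using sub by blast
  also have "\<dots> = {a, b} \<union> {x, y}" using xy(1) by simp
  finally have all: "{1..4::nat} = {a, b, x, y}" by blast
  have cov: "c Z = a \<or> c Z = b \<or> c Z = x \<or> c Z = y" if "Z \<subseteq> {1..n}" for Z
  proof -
    have "Z \<in> BL n" using that unfolding BL_def by auto
    then have "c Z \<in> {1..4}" using ex by blast
    then have "c Z \<in> {a, b, x, y}" unfolding all .
    then show ?thesis by simp
  qed
  obtain p0 where p0: "p0 \<in> BL n" "c p0 = x" using ex xy4 by (metis imageE)
  obtain q0 where q0: "q0 \<in> BL n" "c q0 = y" using ex xy4 by (metis imageE)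
  have rf: "RF4 n c a b x y"
    by (unfold_locales) (use nrb a_def b_def ab xy4 xy cov in auto)
  show "type2 n c \<or> type31 n c \<or> type32 n c \<or> type41 n c \<or> type42 n c"
    using RF4.onlyif[OF rf, of p0 q0] p0 q0 unfolding BL_def by auto
next
  assume "type2 n c \<or> type31 n c \<or> type32 n c \<or> type41 n c \<or> type42 n c"
  then show "\<not> rainbow_B2 n c" using if2 if31 if32 if41 if42 by blast
qed

end
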